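(* Let $f$ be a quadratic form in $s$ variables with integer coefficients and $\mathrm{rank}_{\mathrm{off}}(f)\ge5$. Let $W,q$ be positive integers and $b$ an integer with $\gcd(b,W)=1$. Then for every $\varepsilon>0$, $$B^\ast_{W,b}(q)\ll_{f,\varepsilon}\frac{W^5}{\phi(W)^s}q^{-\frac32+\varepsilon}.$$
   Context: $\mathrm{rank}_{\mathrm{off}}(f)$ for $f(\mathbf{x})=\mathbf{x}M\mathbf{x}^T$ is the maximal rank of a submatrix $(a_{i_k,j_l})_{1\le k,l\le r}$ of $M$ with $\{i_1,\ldots,i_r\}\cap\{j_1,\ldots,j_r\}=\emptyset$. $e(z)=e^{2\pi iz}$, $\phi$ Euler's totient. $S^\ast_{W,b}(q,a)=\sum e(af(\mathbf{c})/q)$ over $1\le c_1,\ldots,c_s\le qW$ with $\gcd(c_j,q)=1$ and $c_j\equiv b\pmod W$ for all $j$, and $B^\ast_{W,b}(q)=\phi(qW)^{-s}\sum_{1\le a\le q,\ \gcd(a,q)=1}S^\ast_{W,b}(q,a)$. *)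

theory Defs
  imports Complex_Main "HOL-Number_Theory.Number_Theory" "Jordan_Normal_Form.DL_Rank"
begin

definition qform :: "nat \<Rightarrow> (nat \<Rightarrow> nat \<Rightarrow> real) \<Rightarrow> (nat \<Rightarrow> int) \<Rightarrow> real" where
  "qform s M x = (\<Sum>i<s. \<Sum>j<s. M i j * of_int (x i) * of_int (x j))"

definition rank_off :: "nat \<Rightarrow> (nat \<Rightarrow> nat \<Rightarrow> real) \<Rightarrow> nat" where
  "rank_off s M = Max {vec_space.rank r (mat r r (\<lambda>(k, l). M (I k) (J l)) :: real mat) | r I J.
      inj_on I {..<r} \<and> inj_on J {..<r} \<and> I ` {..<r} \<subseteq> {..<s} \<and> J ` {..<r} \<subseteq> {..<s}
      \<and> I ` {..<r} \<inter> J ` {..<r} = {}}"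

definition e :: "real \<Rightarrow> complex" where
  "e z = exp (2 * of_real pi * \<i> * of_real z)"

definition S_star :: "nat \<Rightarrow> (nat \<Rightarrow> nat \<Rightarrow> real) \<Rightarrow> nat \<Rightarrow> int \<Rightarrow> nat \<Rightarrow> int \<Rightarrow> complex" where
  "S_star s M W b q a = (\<Sum>c \<in> PiE {..<s} (\<lambda>_. {c. 1 \<le> c \<and> c \<le> int (q * W) \<and>
        coprime c (int q) \<and> [c = b] (mod int W)}).
      e (of_int a * qform s M c / of_nat q))"

definition B_star :: "nat \<Rightarrow> (nat \<Rightarrow> nat \<Rightarrow> real) \<Rightarrow> nat \<Rightarrow> int \<Rightarrow> nat \<Rightarrow> complex" where
  "B_star s M W b q = (\<Sum>a \<in> {a. 1 \<le> a \<and> a \<le> int q \<and> coprime a (int q)}. S_star s M W b q a)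
      / of_nat (totient (q * W)) ^ s"

end

theory Submission
  imports Defs
begin

lemma totient_lower:
  fixes \<delta> :: real assumes "\<delta> > 0"
  shows "\<exists>c>0. \<forall>n::nat. n > 0 \<longrightarrow> real (totient n) \<ge> c * real n powr (1 - \<delta>)"
proof -
  define P0 :: nat where "P0 = nat \<lceil>2 powr (1/\<delta>)\<rceil>"
  define c :: real where "c = (1/2) ^ (Suc P0)"
  have cpos: "c > 0" by (simp add: c_def)
  have key: "\<And>p::nat. prime p \<Longrightarrow> 1 - 1 / real p \<ge> (if p \<le> P0 then 1/2 else 1) * real p powr (-\<delta>)"
  proof -
    fix p :: nat assume pp: "prime p"
    have p2: "real p \<ge> 2" using prime_ge_2_nat[OF pp] by simp
    have h1: "1 - 1 / real p \<ge> 1/2" using p2 by (simp add: field_simps)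
    have h2: "real p powr (-\<delta>) \<le> 1" using p2 assms by (simp add: powr_minus_divide ge_one_powr_ge_zero)
    show "1 - 1 / real p \<ge> (if p \<le> P0 then 1/2 else 1) * real p powr (-\<delta>)"
    proof (cases "p \<le> P0")
      case True then show ?thesis using h1 h2 by simp
    next
      case False
      then have "real p > 2 powr (1/\<delta>)" unfolding P0_def by linarith
      then have "real p powr \<delta> > (2 powr (1/\<delta>)) powr \<delta>"
        using assms by (intro powr_less_mono2) auto
      also have "(2 powr (1/\<delta>)) powr \<delta> = 2" using assms by (simp add: powr_powr)
      finally have "real p powr \<delta> > 2" .
      then have "real p powr (-\<delta>) < 1/2" using p2 by (simp add: powr_minus_divide divide_simps)
      then show ?thesis using False h1 by (simp only: if_False)
    qed
  qed
  have "\<forall>n::nat. n > 0 \<longrightarrow> real (totient n) \<ge> c * real n powr (1 - \<delta>)"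
  proof (intro allI impI)
    fix n :: nat assume n: "n > 0"
    let ?P = "prime_factors n"
    have fin: "finite ?P" by simp
    have A1: "(\<Prod>p\<in>?P. 1 - 1 / real p) \<ge> (\<Prod>p\<in>?P. (if p \<le> P0 then 1/2 else 1) * real p powr (-\<delta>))"
      by (intro prod_mono conjI key mult_nonneg_nonneg) (auto simp: prime_factors_multiplicity)
    have A2: "(\<Prod>p\<in>?P. (if p \<le> P0 then 1/2 else 1) * real p powr (-\<delta>)) = (\<Prod>p\<in>?P. (if p \<le> P0 then 1/2 else 1)) * (\<Prod>p\<in>?P. real p powr (-\<delta>))"
      by (simp add: prod.distrib)
    have A3: "(\<Prod>p\<in>?P. (if p \<le> P0 then 1/2 else 1::real)) = (1/2) ^ card (?P \<inter> {..P0})"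
      by (subst prod.If_cases) (auto simp: Int_def)
    have A4: "(\<Prod>p\<in>?P. real p powr (-\<delta>)) = (\<Prod>p\<in>?P. real p) powr (-\<delta>)"
      by (subst prod_powr_distrib) auto
    have A: "(\<Prod>p\<in>?P. 1 - 1 / real p) \<ge> (1/2) ^ card (?P \<inter> {..P0}) * (\<Prod>p\<in>?P. real p) powr (-\<delta>)"
      using A1 A2 A3 A4 by simp
    have "card (?P \<inter> {..P0}) \<le> card {..P0}" by (intro card_mono) auto
    then have B: "(1/2::real) ^ card (?P \<inter> {..P0}) \<ge> c" unfolding c_def
      by (intro power_decreasing) auto
    have "(\<Prod>p\<in>?P. p) \<le> (\<Prod>p\<in>?P. p ^ multiplicity p n)"
      by (intro prod_mono) (auto simp: prime_factors_multiplicity prime_ge_Suc_0_nat intro: self_le_power)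
    also have "\<dots> = n" using n by (simp add: prime_factorization_nat[symmetric])
    finally have "real (\<Prod>p\<in>?P. p) \<le> real n" by (simp only: of_nat_le_iff)
    then have "(\<Prod>p\<in>?P. real p) \<le> real n" by simp
    moreover have "(\<Prod>p\<in>?P. real p) > 0" by (intro prod_pos) (auto simp: prime_factors_multiplicity prime_gt_0_nat)
    ultimately have C: "(\<Prod>p\<in>?P. real p) powr (-\<delta>) \<ge> real n powr (-\<delta>)"
      using assms by (intro powr_mono2') auto
    have "(\<Prod>p\<in>?P. 1 - 1 / real p) \<ge> c * real n powr (-\<delta>)"
    proof -
      have "c * real n powr (-\<delta>) \<le> (1/2) ^ card (?P \<inter> {..P0}) * (\<Prod>p\<in>?P. real p) powr (-\<delta>)"
        by (rule mult_mono[OF B C]) auto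
      then show ?thesis using A by linarith
    qed
    then have "real n * (\<Prod>p\<in>?P. 1 - 1 / real p) \<ge> real n * (c * real n powr (-\<delta>))"
      by (intro mult_left_mono) auto
    also have "real n * (c * real n powr (-\<delta>)) = c * real n powr (1 - \<delta>)"
      using n by (simp add: powr_diff powr_minus_divide field_simps)
    finally show "real (totient n) \<ge> c * real n powr (1 - \<delta>)" by (simp add: totient_formula2)
  qed
  then show ?thesis using cpos by blast
qed

definition Xs :: "nat \<Rightarrow> nat \<Rightarrow> int \<Rightarrow> int set" where
  "Xs q W b = {c. 1 \<le> c \<and> c \<le> int (q * W) \<and> coprime c (int q) \<and> [c = b] (mod int W)}"

lemma finite_Xs [simp]: "finite (Xs q W b)"
  unfolding Xs_def by (rule finite_subset[of _ "{1..int (q*W)}"]) auto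

lemma lift_prime_set:
  fixes v :: int and W :: nat
  assumes "finite P" "\<forall>p\<in>P. prime p" "coprime v (int W)"
  shows "\<exists>t. [t = v] (mod int W) \<and> (\<forall>p\<in>P. \<not> p dvd t)"
  using assms
proof (induction P rule: finite_induct)
  case empty
  then show ?case by (auto intro: cong_refl)
next
  case (insert p P)
  then obtain t where t: "[t = v] (mod int W)" "\<forall>p'\<in>P. \<not> p' dvd t" by auto
  have pp: "prime p" using insert by auto
  show ?case
  proof (cases "p dvd t")
    case False
    then show ?thesis using t by auto
  next
    case True
    have pW: "\<not> p dvd int W"
    proof
      assume "p dvd int W"
      moreover have "int W dvd t - v" using t(1) by (simp add: cong_iff_dvd_diff)
      ultimately have "p dvd t - v" by (rule dvd_trans)
      then have "p dvd t - (t - v)" using True by (simp only: dvd_diff)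
      then have "p dvd v" by simp
      then show False using insert(5) \<open>p dvd int W\<close> pp
        by (meson not_coprimeI not_prime_unit)
    qed
    define t' where "t' = t + int W * (\<Prod>P)"
    have "[t' = t] (mod int W)" unfolding t'_def by (simp add: cong_iff_dvd_diff)
    then have c1: "[t' = v] (mod int W)" using t(1) by (rule cong_trans)
    have c2: "\<not> p' dvd t'" if "p' \<in> P" for p'
    proof
      assume "p' dvd t'"
      moreover have "p' dvd int W * (\<Prod>P)" using dvd_prodI[OF insert(1) that, of "\<lambda>x. x"] by (rule dvd_mult)
      ultimately have "p' dvd t" unfolding t'_def using dvd_add_left_iff by blast
      then show False using t(2) that by auto
    qed
    have c3: "\<not> p dvd t'"
    proof
      assume "p dvd t'"
      then have "p dvd int W * (\<Prod>P)" unfolding t'_def using True dvd_add_right_iff by blast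
      then have "p dvd (\<Prod>P)" using pW pp prime_dvd_mult_iff by blast
      then obtain p' where "p' \<in> P" "p dvd p'" using prime_dvd_prod_iff[OF insert(1) pp, of id] by auto
      then have "p = p'" using insert pp
        by (intro primes_dvd_imp_eq) auto
      then show False using insert(2) \<open>p' \<in> P\<close> by simp
    qed
    show ?thesis using c1 c2 c3 by auto
  qed
qed

lemma lift_unit:
  fixes v :: int and W q :: nat
  assumes "q > 0" "coprime v (int W)"
  shows "\<exists>t. [t = v] (mod int W) \<and> coprime t (int q)"
proof -
  obtain t where t: "[t = v] (mod int W)" "\<forall>p\<in>prime_factors (int q). \<not> p dvd t"
    using lift_prime_set[of "prime_factors (int q)" v W] assms by auto
  have "coprime t (int q)"
  proof (rule ccontr)
    assume nc: "\<not> coprime t (int q)"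
    have g0: "gcd t (int q) \<noteq> 0" using assms by simp
    have gu: "\<not> is_unit (gcd t (int q))" using nc by (simp add: coprime_iff_gcd_eq_1 is_unit_gcd)
    obtain p where p: "p dvd gcd t (int q)" "prime p" using prime_divisor_exists[OF g0 gu] by auto
    then have "p \<in> prime_factors (int q)" using assms
      by (simp add: in_prime_factors_iff)
    then show False using t(2) p by auto
  qed
  then show ?thesis using t by auto
qed

lemma card_Xs_le:
  fixes b u :: int and q W :: nat
  assumes q: "q > 0" and W: "W > 0" and b: "coprime b (int W)" and u: "coprime u (int W)"
  shows "card (Xs q W b) \<le> card (Xs q W u)"
proof -
  define N where "N = int (q * W)"
  have N0: "N > 0" using q W by (simp add: N_def)
  obtain b' where b': "[b * b' = 1] (mod int W)" using cong_solve_coprime_int[OF b] by auto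
  have cb': "coprime b' (int W)"
    using b' by (metis coprime_1_left coprime_cong_transfer_left coprime_mult_left_iff cong_sym)
  have cv: "coprime (u * b') (int W)" using u cb' by simp
  obtain t where t: "[t = u * b'] (mod int W)" "coprime t (int q)" using lift_unit[OF q cv] by auto
  have tW: "coprime t (int W)" using coprime_cong_transfer_left[OF cv cong_sym[OF t(1)]] .
  have tN: "coprime t N" unfolding N_def using t(2) tW by simp
  define g where "g c = (t * c - 1) mod N + 1" for c
  have gcong: "[g c = t * c] (mod N)" for c
  proof -
    have "((t * c - 1) mod N + 1) mod N = ((t * c - 1) + 1) mod N" by (rule mod_add_left_eq)
    then show ?thesis unfolding g_def cong_def by simp
  qed
  have "inj_on g (Xs q W b)"
  proof (rule inj_onI)
    fix c1 c2 assume c: "c1 \<in> Xs q W b" "c2 \<in> Xs q W b" "g c1 = g c2"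
    have "[t * c1 = t * c2] (mod N)" using gcong[of c1] gcong[of c2] c(3)
      by (metis cong_sym cong_trans)
    then have "[c1 = c2] (mod N)" using cong_mult_lcancel[OF tN] by blast
    then have "[c1 - 1 = c2 - 1] (mod N)" by (simp add: cong_diff)
    moreover have "0 \<le> c1 - 1" "c1 - 1 < N" "0 \<le> c2 - 1" "c2 - 1 < N"
      using c(1,2) unfolding Xs_def N_def by auto
    ultimately have "c1 - 1 = c2 - 1" using cong_less_imp_eq_int by blast
    then show "c1 = c2" by simp
  qed
  moreover have "g ` Xs q W b \<subseteq> Xs q W u"
  proof
    fix y assume "y \<in> g ` Xs q W b"
    then obtain c where c: "c \<in> Xs q W b" "y = g c" by auto
    have "(t * c - 1) mod N < N" "0 \<le> (t * c - 1) mod N" using N0 by simp_all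
    then have r: "1 \<le> g c" "g c \<le> N" unfolding g_def by linarith+
    have "[g c = t * c] (mod int q)"
      using gcong[of c] unfolding N_def by (metis cong_dvd_modulus dvd_triv_left of_nat_mult)
    moreover have "coprime (t * c) (int q)" using t(2) c(1) unfolding Xs_def by simp
    ultimately have cq: "coprime (g c) (int q)" using coprime_cong_transfer_left cong_sym by blast
    have "[g c = t * c] (mod int W)"
      using gcong[of c] unfolding N_def by (metis cong_dvd_modulus dvd_triv_right of_nat_mult)
    moreover have "[t * c = (u * b') * b] (mod int W)"
      using t(1) c(1) unfolding Xs_def by (simp add: cong_mult)
    moreover have "[(u * b') * b = u * (b * b')] (mod int W)" by (simp add: ac_simps cong_refl)
    moreover have "[u * (b * b') = u * 1] (mod int W)" using cong_scalar_left[OF b', of u] by simp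
    ultimately have "[g c = u] (mod int W)" by (metis cong_trans mult_1_right)
    then show "y \<in> Xs q W u" using r cq c(2) unfolding Xs_def N_def by auto
  qed
  ultimately show ?thesis by (intro card_inj_on_le[of g]) auto
qed

lemma card_Xs:
  fixes b :: int and q W :: nat
  assumes q: "q > 0" and W: "W > 0" and b: "coprime b (int W)"
  shows "card (Xs q W b) * totient W = totient (q * W)"
proof -
  define N where "N = int (q * W)"
  define U where "U = int ` totatives W"
  have eqc: "card (Xs q W u) = card (Xs q W b)" if "u \<in> U" for u
  proof -
    have "coprime u (int W)" using that unfolding U_def by (auto simp: totatives_def)
    then show ?thesis using card_Xs_le[OF q W b] card_Xs_le[OF q W _ b] by (meson le_antisym)
  qed
  have T: "int ` totatives (q * W) = (\<Union>u\<in>U. Xs q W u)"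
  proof (intro equalityI subsetI)
    fix c assume "c \<in> int ` totatives (q * W)"
    then obtain k where k: "k \<in> totatives (q*W)" "c = int k" by auto
    have c1: "1 \<le> c" "c \<le> int (q * W)" "coprime c (int q)" "coprime c (int W)"
      using k by (auto simp: totatives_def simp flip: of_nat_mult)
    define u where "u = (c - 1) mod int W + 1"
    have "((c - 1) mod int W + 1) mod int W = ((c - 1) + 1) mod int W" by (rule mod_add_left_eq)
    then have "[u = c] (mod int W)" unfolding u_def cong_def by simp
    then have cu: "[c = u] (mod int W)" by (rule cong_sym)
    have "(c - 1) mod int W < int W" "0 \<le> (c - 1) mod int W" using W by simp_all
    then have ur: "1 \<le> u" "u \<le> int W" unfolding u_def by linarith+
    have "coprime u (int W)" using coprime_cong_transfer_left[OF c1(4) cu] .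
    moreover have "u = int (nat u)" using ur by simp
    ultimately have "coprime (int (nat u)) (int W)" by simp
    then have "coprime (nat u) W" by (simp only: coprime_int_iff)
    then have "u \<in> U" unfolding U_def using ur
      by (auto simp: totatives_def image_iff intro!: exI[of _ "nat u"])
    moreover have "c \<in> Xs q W u" unfolding Xs_def using c1 cu by auto
    ultimately show "c \<in> (\<Union>u\<in>U. Xs q W u)" by auto
  next
    fix c assume "c \<in> (\<Union>u\<in>U. Xs q W u)"
    then obtain u where u: "u \<in> U" "c \<in> Xs q W u" by auto
    have "coprime u (int W)" using u(1) unfolding U_def by (auto simp: totatives_def)
    then have "coprime c (int W)" using u(2) unfolding Xs_def using coprime_cong_transfer_left cong_sym by blast
    then have "coprime c (int (q * W))" using u(2) unfolding Xs_def by simp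
    moreover have "1 \<le> c" "c \<le> int (q*W)" using u(2) unfolding Xs_def by auto
    ultimately have h: "coprime (int (nat c)) (int (q * W))" "1 \<le> c" "int (nat c) \<le> int (q*W)" "c = int (nat c)" by simp_all
    have "coprime (nat c) (q * W)" using h(1) by (simp only: coprime_int_iff)
    moreover have "nat c \<le> q * W" using h(3) by (simp only: of_nat_le_iff)
    moreover have "nat c > 0" using h(2) by simp
    ultimately have "nat c \<in> totatives (q * W)" by (simp only: in_totatives_iff)
    then show "c \<in> int ` totatives (q * W)" using h(4) by (metis image_eqI)
  qed
  have disj: "Xs q W u1 \<inter> Xs q W u2 = {}" if "u1 \<in> U" "u2 \<in> U" "u1 \<noteq> u2" for u1 u2
  proof (rule ccontr)
    assume "Xs q W u1 \<inter> Xs q W u2 \<noteq> {}"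
    then obtain c where "c \<in> Xs q W u1" "c \<in> Xs q W u2" by auto
    then have "[c = u1] (mod int W)" "[c = u2] (mod int W)" unfolding Xs_def by auto
    then have "[u1 = u2] (mod int W)" using cong_sym cong_trans by blast
    then have "[u1 - 1 = u2 - 1] (mod int W)" by (simp add: cong_diff)
    moreover have "0 \<le> u1 - 1" "u1 - 1 < int W" "0 \<le> u2 - 1" "u2 - 1 < int W"
      using that unfolding U_def by (auto simp: totatives_def)
    ultimately have "u1 - 1 = u2 - 1" using cong_less_imp_eq_int by blast
    then show False using that by simp
  qed
  have "totient (q * W) = card (int ` totatives (q * W))"
    by (simp add: totient_def card_image)
  also have "\<dots> = (\<Sum>u\<in>U. card (Xs q W u))"
    unfolding T by (intro card_UN_disjoint) (auto simp: U_def disj)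
  also have "\<dots> = (\<Sum>u\<in>U. card (Xs q W b))" by (intro sum.cong refl eqc)
  also have "\<dots> = card U * card (Xs q W b)" by simp
  also have "card U = totient W" unfolding U_def by (simp add: totient_def card_image)
  finally show ?thesis by simp
qed

lemma e_cis: "e x = cis (2 * pi * x)"
  unfolding e_def cis_conv_exp by (simp add: ac_simps)

lemma e_add: "e (x + y) = e x * e y"
  by (simp add: e_cis cis_mult distrib_left)

lemma e_diff: "e (x - y) = e x * cnj (e y)"
  by (simp add: e_cis cis_cnj cis_mult right_diff_distrib)

lemma norm_e [simp]: "norm (e x) = 1"
  by (simp add: e_cis)

lemma e_int: "e (of_int n) = 1"
  unfolding e_cis by (rule cis_multiple_2pi) simp

lemma e_zero [simp]: "e 0 = 1"
  by (simp add: e_cis)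

lemma e_cnj_mult: "e x * cnj (e x) = 1"
proof -
  have "e x * cnj (e x) = of_real ((norm (e x))^2)" by (simp only: complex_norm_square)
  then show ?thesis by simp
qed

lemma e_pow: "e x ^ n = e (real n * x)"
  by (simp add: e_cis DeMoivre ac_simps)

lemma e_eq_1_imp: "e x = 1 \<Longrightarrow> x \<in> \<int>"
proof -
  assume "e x = 1"
  then have "cos (2 * pi * x) = 1" unfolding e_cis by (metis cis.sel(1) one_complex.sel(1))
  then obtain n :: int where "2 * pi * x = real_of_int n * 2 * pi" using cos_one_2pi_int by blast
  then have "x = real_of_int n" by simp
  then show "x \<in> \<int>" by simp
qed

lemma geom_e:
  fixes m :: int and q :: nat
  assumes q: "q > 0"
  shows "(\<Sum>u<q. e (of_int m * real u / real q)) = (if int q dvd m then of_nat q else 0)"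
proof (cases "int q dvd m")
  case True
  then obtain k where k: "m = int q * k" by auto
  have "e (of_int m * real u / real q) = 1" for u
  proof -
    have "of_int m * real u / real q = of_int (k * int u)" using q k by simp
    then show ?thesis by (simp only: e_int)
  qed
  then show ?thesis using True by simp
next
  case False
  define z where "z = e (of_int m / real q)"
  have zu: "e (of_int m * real u / real q) = z ^ u" for u
    unfolding z_def e_pow by (simp add: ac_simps)
  have z1: "z \<noteq> 1"
  proof
    assume "z = 1"
    then have "of_int m / real q \<in> \<int>" unfolding z_def by (rule e_eq_1_imp)
    then obtain k :: int where "of_int m / real q = of_int k" by (auto elim: Ints_cases)
    then have "of_int m = real q * of_int k" using q by (simp add: field_simps)
    then have "m = int q * k" by (metis of_int_eq_iff of_int_mult of_int_of_nat_eq)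
    then show False using False by simp
  qed
  have zq: "z ^ q = 1" unfolding z_def e_pow using q by (simp add: e_int)
  have "(\<Sum>u<q. e (of_int m * real u / real q)) = (\<Sum>u<q. z ^ u)" by (simp add: zu)
  also have "\<dots> = 0" using z1 zq by (simp add: sum_gp_strict)
  finally show ?thesis using False by simp
qed

lemma CS_card:
  fixes f :: "'a \<Rightarrow> real"
  shows "(\<Sum>i\<in>I. f i)\<^sup>2 \<le> real (card I) * (\<Sum>i\<in>I. (f i)\<^sup>2)"
proof (cases "finite I \<and> I \<noteq> {}")
  case True
  define r where "r = (\<Sum>i\<in>I. f i) / real (card I)"
  have cpos: "real (card I) > 0" using True by (simp add: card_gt_0_iff)
  have "0 \<le> (\<Sum>i\<in>I. (f i - r)\<^sup>2)" by (simp add: sum_nonneg)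
  also have "\<dots> = (\<Sum>i\<in>I. (f i)\<^sup>2) - 2 * r * (\<Sum>i\<in>I. f i) + r\<^sup>2 * real (card I)"
  proof -
    have "(\<Sum>i\<in>I. (f i - r)\<^sup>2) = (\<Sum>i\<in>I. (f i)\<^sup>2 - (2 * r) * f i + r\<^sup>2)"
      by (intro sum.cong refl) (simp add: power2_eq_square algebra_simps)
    also have "\<dots> = (\<Sum>i\<in>I. (f i)\<^sup>2) - (\<Sum>i\<in>I. (2 * r) * f i) + (\<Sum>i\<in>I. r\<^sup>2)"
      by (simp only: sum.distrib sum_subtractf)
    also have "(\<Sum>i\<in>I. (2 * r) * f i) = (2 * r) * (\<Sum>i\<in>I. f i)" by (simp only: sum_distrib_left)
    finally show ?thesis by simp
  qed
  also have "\<dots> = (\<Sum>i\<in>I. (f i)\<^sup>2) - (\<Sum>i\<in>I. f i)\<^sup>2 / real (card I)"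
    using cpos by (simp add: r_def power2_eq_square field_simps)
  finally have "(\<Sum>i\<in>I. f i)\<^sup>2 / real (card I) \<le> (\<Sum>i\<in>I. (f i)\<^sup>2)" by simp
  then show ?thesis using cpos by (simp add: divide_le_eq mult.commute)
qed auto

lemma bilinear_CS:
  fixes g :: "'x \<Rightarrow> complex" and h :: "'y \<Rightarrow> complex" and K :: "'x \<Rightarrow> 'y \<Rightarrow> complex"
  assumes fx0: "finite Px0" and sub: "Px \<subseteq> Px0" and fy: "finite Py"
    and g: "\<And>x. norm (g x) \<le> 1" and h: "\<And>y. norm (h y) \<le> 1"
  shows "(norm (\<Sum>x\<in>Px. \<Sum>y\<in>Py. g x * h y * K x y))\<^sup>2
     \<le> real (card Px) * (\<Sum>y\<in>Py. \<Sum>y'\<in>Py. norm (\<Sum>x\<in>Px0. K x y * cnj (K x y')))"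
proof -
  define T where "T x = (\<Sum>y\<in>Py. h y * K x y)" for x
  have fx: "finite Px" using fx0 sub finite_subset by blast
  have "(\<Sum>x\<in>Px. \<Sum>y\<in>Py. g x * h y * K x y) = (\<Sum>x\<in>Px. g x * T x)"
    unfolding T_def by (simp add: sum_distrib_left mult.assoc)
  then have "norm (\<Sum>x\<in>Px. \<Sum>y\<in>Py. g x * h y * K x y) \<le> (\<Sum>x\<in>Px. norm (g x * T x))"
    by (simp add: norm_sum)
  also have "\<dots> \<le> (\<Sum>x\<in>Px. norm (T x))"
    by (intro sum_mono) (simp add: norm_mult mult_left_le_one_le g)
  finally have n1: "norm (\<Sum>x\<in>Px. \<Sum>y\<in>Py. g x * h y * K x y) \<le> (\<Sum>x\<in>Px. norm (T x))" .
  have "(norm (\<Sum>x\<in>Px. \<Sum>y\<in>Py. g x * h y * K x y))\<^sup>2 \<le> (\<Sum>x\<in>Px. norm (T x))\<^sup>2"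
    using n1 by (intro power_mono) auto
  also have "\<dots> \<le> real (card Px) * (\<Sum>x\<in>Px. (norm (T x))\<^sup>2)" by (rule CS_card)
  also have "\<dots> \<le> real (card Px) * (\<Sum>x\<in>Px0. (norm (T x))\<^sup>2)"
    by (intro mult_left_mono sum_mono2 fx0 sub) auto
  also have "(\<Sum>x\<in>Px0. (norm (T x))\<^sup>2) \<le> (\<Sum>y\<in>Py. \<Sum>y'\<in>Py. norm (\<Sum>x\<in>Px0. K x y * cnj (K x y')))"
  proof -
    have eq: "complex_of_real (\<Sum>x\<in>Px0. (norm (T x))\<^sup>2)
        = (\<Sum>y\<in>Py. \<Sum>y'\<in>Py. (h y * cnj (h y')) * (\<Sum>x\<in>Px0. K x y * cnj (K x y')))"
    proof -
      have "complex_of_real (\<Sum>x\<in>Px0. (norm (T x))\<^sup>2) = (\<Sum>x\<in>Px0. T x * cnj (T x))"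
        by (simp only: of_real_sum complex_norm_square)
      also have "\<dots> = (\<Sum>x\<in>Px0. \<Sum>y\<in>Py. \<Sum>y'\<in>Py. (h y * cnj (h y')) * (K x y * cnj (K x y')))"
        unfolding T_def cnj_sum by (simp add: sum_product ac_simps)
      also have "\<dots> = (\<Sum>y\<in>Py. \<Sum>x\<in>Px0. \<Sum>y'\<in>Py. (h y * cnj (h y')) * (K x y * cnj (K x y')))"
        by (rule sum.swap)
      also have "\<dots> = (\<Sum>y\<in>Py. \<Sum>y'\<in>Py. \<Sum>x\<in>Px0. (h y * cnj (h y')) * (K x y * cnj (K x y')))"
        by (intro sum.cong refl sum.swap)
      also have "\<dots> = (\<Sum>y\<in>Py. \<Sum>y'\<in>Py. (h y * cnj (h y')) * (\<Sum>x\<in>Px0. K x y * cnj (K x y')))"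
        by (simp add: sum_distrib_left)
      finally show ?thesis .
    qed
    have "(\<Sum>x\<in>Px0. (norm (T x))\<^sup>2) \<ge> 0" by (simp add: sum_nonneg)
    then have "(\<Sum>x\<in>Px0. (norm (T x))\<^sup>2) = norm (complex_of_real (\<Sum>x\<in>Px0. (norm (T x))\<^sup>2))"
      by (simp only: norm_of_real abs_of_nonneg)
    also have "\<dots> \<le> (\<Sum>y\<in>Py. \<Sum>y'\<in>Py. norm ((h y * cnj (h y')) * (\<Sum>x\<in>Px0. K x y * cnj (K x y'))))"
      unfolding eq by (rule order.trans[OF norm_sum sum_mono]) (rule norm_sum)
    also have "\<dots> \<le> (\<Sum>y\<in>Py. \<Sum>y'\<in>Py. norm (\<Sum>x\<in>Px0. K x y * cnj (K x y')))"
    proof (intro sum_mono)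
      fix y y' assume "y \<in> Py" "y' \<in> Py"
      have "norm (h y * cnj (h y')) \<le> 1" using h[of y] h[of y']
        by (simp add: norm_mult mult_le_one)
      then show "norm ((h y * cnj (h y')) * (\<Sum>x\<in>Px0. K x y * cnj (K x y'))) \<le> norm (\<Sum>x\<in>Px0. K x y * cnj (K x y'))"
        by (simp add: norm_mult mult_left_le_one_le)
    qed
    finally show ?thesis .
  qed
  then have "real (card Px) * (\<Sum>x\<in>Px0. (norm (T x))\<^sup>2) \<le> real (card Px) * (\<Sum>y\<in>Py. \<Sum>y'\<in>Py. norm (\<Sum>x\<in>Px0. K x y * cnj (K x y')))"
    by (intro mult_left_mono) auto
  finally show ?thesis .
qed

definition merge :: "'i set \<Rightarrow> ('i \<Rightarrow> 'a) \<Rightarrow> ('i \<Rightarrow> 'a) \<Rightarrow> 'i \<Rightarrow> 'a" where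
  "merge S x y = (\<lambda>i. if i \<in> S then x i else y i)"

lemma sum_split_PiE:
  fixes \<phi> :: "('i \<Rightarrow> 'a) \<Rightarrow> 'b::comm_monoid_add"
  assumes "S \<inter> T = {}"
  shows "(\<Sum>c\<in>PiE (S \<union> T) F. \<phi> c) = (\<Sum>x\<in>PiE S F. \<Sum>y\<in>PiE T F. \<phi> (merge S x y))"
proof -
  have mr: "merge S (restrict c S) (restrict c T) = c" if "c \<in> PiE (S \<union> T) F" for c
    using that by (auto simp: merge_def PiE_iff extensional_def fun_eq_iff)
  have "(\<Sum>c\<in>PiE (S \<union> T) F. \<phi> c) = (\<Sum>(x, y)\<in>PiE S F \<times> PiE T F. \<phi> (merge S x y))"
    using assms mr
    by (intro sum.reindex_bij_witness[of _ "\<lambda>(x,y). merge S x y" "\<lambda>c. (restrict c S, restrict c T)"])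
       (auto simp: merge_def PiE_iff extensional_def restrict_def fun_eq_iff)
  also have "\<dots> = (\<Sum>x\<in>PiE S F. \<Sum>y\<in>PiE T F. \<phi> (merge S x y))"
    by (rule sum.cartesian_product[symmetric])
  finally show ?thesis .
qed

lemma e_sum: "finite I \<Longrightarrow> e (\<Sum>i\<in>I. f i) = (\<Prod>i\<in>I. e (f i))"
  by (induction I rule: finite_induct) (simp_all add: e_add)

definition X0 :: "nat \<Rightarrow> nat \<Rightarrow> int \<Rightarrow> int set" where
  "X0 q W b = (\<lambda>u. ((b - 1) mod int W + 1) + int W * int u) ` {..<q}"

lemma finite_X0 [simp]: "finite (X0 q W b)"
  unfolding X0_def by simp

lemma Xs_sub_X0:
  assumes W: "W > 0"
  shows "{c. 1 \<le> c \<and> c \<le> int (q * W) \<and> coprime c (int q) \<and> [c = b] (mod int W)} \<subseteq> X0 q W b"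
proof
  fix c assume "c \<in> {c. 1 \<le> c \<and> c \<le> int (q * W) \<and> coprime c (int q) \<and> [c = b] (mod int W)}"
  then have c: "1 \<le> c" "c \<le> int q * int W" "[c = b] (mod int W)" by auto
  define b0 where "b0 = (b - 1) mod int W + 1"
  have "((b - 1) mod int W + 1) mod int W = ((b - 1) + 1) mod int W" by (rule mod_add_left_eq)
  then have "[b0 = b] (mod int W)" unfolding b0_def cong_def by simp
  then have "[c = b0] (mod int W)" using c(3) cong_sym cong_trans by blast
  then have "int W dvd c - b0" by (simp add: cong_iff_dvd_diff)
  then obtain k where k: "c - b0 = int W * k" by (auto elim: dvdE)
  have "(b - 1) mod int W < int W" "0 \<le> (b - 1) mod int W" using W by simp_all
  then have b0r: "1 \<le> b0" "b0 \<le> int W" unfolding b0_def by linarith+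
  have "int W * k > int W * (-1)" using k c(1) b0r by simp
  have k0: "k \<ge> 0"
  proof (rule ccontr)
    assume "\<not> k \<ge> 0"
    then have "k \<le> -1" by simp
    then have "int W * k \<le> int W * (-1)" by (intro mult_left_mono) auto
    then show False using \<open>int W * k > int W * (-1)\<close> by simp
  qed
  have "c \<le> int W * int q" using c(2) by (simp only: mult.commute)
  then have "int W * k < int W * int q" using k b0r by linarith
  have kq: "k < int q"
  proof (rule ccontr)
    assume "\<not> k < int q"
    then have "int W * int q \<le> int W * k" by (intro mult_left_mono) auto
    then show False using \<open>int W * k < int W * int q\<close> by simp
  qed
  have "c = b0 + int W * int (nat k)" using k k0 by simp
  moreover have "nat k \<in> {..<q}" using kq k0 by simp
  ultimately show "c \<in> X0 q W b" unfolding X0_def b0_def by blast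
qed

lemma sum_X0:
  fixes a L b :: int
  assumes q: "q > 0" and W: "W > 0" and a: "coprime a (int q)"
  shows "norm (\<Sum>t\<in>X0 q W b. e (of_int (a * t * L) / real q)) \<le> (if int q dvd int W * L then real q else 0)"
proof -
  define b0 where "b0 = (b - 1) mod int W + 1"
  have inj: "inj_on (\<lambda>u. b0 + int W * int u) {..<q}" using W by (auto simp: inj_on_def)
  have "(\<Sum>t\<in>X0 q W b. e (of_int (a * t * L) / real q))
      = (\<Sum>u<q. e (of_int (a * (b0 + int W * int u) * L) / real q))"
    unfolding X0_def b0_def[symmetric] by (subst sum.reindex[OF inj]) simp
  also have "\<dots> = (\<Sum>u<q. e (of_int (a * b0 * L) / real q) * e (of_int (a * int W * L) * real u / real q))"
    by (intro sum.cong refl) (simp add: e_add[symmetric] algebra_simps add_divide_distrib)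
  also have "\<dots> = e (of_int (a * b0 * L) / real q) * (\<Sum>u<q. e (of_int (a * int W * L) * real u / real q))"
    by (simp add: sum_distrib_left)
  also have "(\<Sum>u<q. e (of_int (a * int W * L) * real u / real q)) = (if int q dvd (a * int W * L) then of_nat q else 0)"
    by (rule geom_e[OF q])
  finally have "norm (\<Sum>t\<in>X0 q W b. e (of_int (a * t * L) / real q)) = (if int q dvd (a * int W * L) then real q else 0)"
    by (simp add: norm_mult)
  also have "int q dvd (a * int W * L) \<longleftrightarrow> int q dvd int W * L"
    using a by (simp add: mult.assoc coprime_dvd_mult_right_iff coprime_commute)
  finally show ?thesis by simp
qed

lemma count_T:
  fixes K v :: int
  assumes q: "q > 0" and W: "W > 0" and K: "K \<noteq> 0"
  shows "card {t \<in> {1..int (q * W)}. int q dvd K * (v - t)} \<le> nat \<bar>K\<bar> * W"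
proof -
  let ?T = "{t \<in> {1..int (q * W)}. int q dvd K * (v - t)}"
  define \<psi> where "\<psi> t = (\<bar>K\<bar> * (t - 1)) div int q" for t
  have "inj_on \<psi> ?T"
  proof (rule inj_onI)
    fix t1 t2 assume t: "t1 \<in> ?T" "t2 \<in> ?T" "\<psi> t1 = \<psi> t2"
    define x1 where "x1 = \<bar>K\<bar> * (t1 - 1)"
    define x2 where "x2 = \<bar>K\<bar> * (t2 - 1)"
    have dd: "x1 div int q = x2 div int q" using t(3) unfolding \<psi>_def x1_def x2_def .
    have "x1 = int q * (x1 div int q) + x1 mod int q" "x2 = int q * (x2 div int q) + x2 mod int q"
      by simp_all
    then have "x1 = int q * (x2 div int q) + x1 mod int q" "x2 = int q * (x2 div int q) + x2 mod int q"
      using dd by simp_all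
    moreover have "0 \<le> x1 mod int q" "x1 mod int q < int q" "0 \<le> x2 mod int q" "x2 mod int q < int q"
      using q by simp_all
    ultimately have close: "\<bar>x1 - x2\<bar> < int q" by linarith
    have "int q dvd K * (v - t2) - K * (v - t1)" using t(1,2) by (simp add: dvd_diff)
    then have "int q dvd K * (t1 - t2)" by (simp add: algebra_simps)
    then have "int q dvd \<bar>K\<bar> * (t1 - t2)" by (cases "K \<ge> 0") (simp_all add: abs_if)
    moreover have "x1 - x2 = \<bar>K\<bar> * (t1 - t2)" unfolding x1_def x2_def by (simp add: algebra_simps)
    ultimately have "int q dvd x1 - x2" by simp
    have "x1 - x2 = 0"
    proof (rule ccontr)
      assume "x1 - x2 \<noteq> 0"
      from dvd_imp_le_int[OF this \<open>int q dvd x1 - x2\<close>] have "\<bar>int q\<bar> \<le> \<bar>x1 - x2\<bar>" .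
      then show False using close by simp
    qed
    then have "\<bar>K\<bar> * (t1 - t2) = 0" unfolding x1_def x2_def by (simp add: algebra_simps)
    then show "t1 = t2" using K by simp
  qed
  moreover have "\<psi> ` ?T \<subseteq> {0..<\<bar>K\<bar> * int W}"
  proof
    fix y assume "y \<in> \<psi> ` ?T"
    then obtain t where t: "t \<in> ?T" "y = \<psi> t" by auto
    have t1: "0 \<le> t - 1" "t - 1 < int q * int W" using t(1) by auto
    have "0 \<le> \<bar>K\<bar> * (t - 1)" using t1 by simp
    then have y0: "0 \<le> y" unfolding t(2) \<psi>_def using q by (simp add: pos_imp_zdiv_nonneg_iff)
    have "\<bar>K\<bar> * (t - 1) < \<bar>K\<bar> * (int q * int W)" using t1 K by (intro mult_strict_left_mono) auto
    then have "\<bar>K\<bar> * (t - 1) < int q * (\<bar>K\<bar> * int W)" by (simp add: ac_simps)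
    moreover
    { fix x m :: int assume xm: "x < int q * m"
      have "x = int q * (x div int q) + x mod int q" by simp
      moreover have "x mod int q \<ge> 0" using q by simp
      ultimately have le: "int q * (x div int q) \<le> x" by linarith
      have "x div int q < m"
      proof (rule ccontr)
        assume "\<not> x div int q < m"
        then have "int q * m \<le> int q * (x div int q)" by (intro mult_left_mono) auto
        then show False using le xm by linarith
      qed }
    ultimately have "\<bar>K\<bar> * (t - 1) div int q < \<bar>K\<bar> * int W" by blast
    then show "y \<in> {0..<\<bar>K\<bar> * int W}" using y0 unfolding t(2) \<psi>_def by simp
  qed
  ultimately have "card ?T \<le> card {0..<\<bar>K\<bar> * int W}"
    by (intro card_inj_on_le[of \<psi>]) auto
  also have "\<dots> = nat \<bar>K\<bar> * W" by (simp add: nat_mult_distrib)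
  finally show ?thesis .
qed

definition alpha :: "nat \<Rightarrow> (nat \<Rightarrow> nat \<Rightarrow> real) \<Rightarrow> nat set \<Rightarrow> (nat \<Rightarrow> int) \<Rightarrow> real" where
  "alpha s M B c = (\<Sum>i<s. \<Sum>j<s. if i \<notin> B \<and> j \<notin> B then M i j * of_int (c i) * of_int (c j) else 0)"

definition beta :: "nat \<Rightarrow> (nat \<Rightarrow> nat \<Rightarrow> real) \<Rightarrow> nat set \<Rightarrow> nat set \<Rightarrow> (nat \<Rightarrow> int) \<Rightarrow> real" where
  "beta s M A B c = (\<Sum>i<s. \<Sum>j<s. if (i \<in> B \<or> j \<in> B) \<and> i \<notin> A \<and> j \<notin> A then M i j * of_int (c i) * of_int (c j) else 0)"

definition gamma :: "(nat \<Rightarrow> nat \<Rightarrow> real) \<Rightarrow> nat set \<Rightarrow> nat set \<Rightarrow> (nat \<Rightarrow> int) \<Rightarrow> (nat \<Rightarrow> int) \<Rightarrow> real" where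
  "gamma M A B x y = (\<Sum>i\<in>A. \<Sum>j\<in>B. 2 * M i j * of_int (x i) * of_int (y j))"

lemma qform_decomp:
  assumes symm: "\<And>i j. i < s \<Longrightarrow> j < s \<Longrightarrow> M i j = M j i"
    and A: "A \<subseteq> {..<s}" and B: "B \<subseteq> {..<s}" and AB: "A \<inter> B = {}"
  shows "qform s M c = alpha s M B c + beta s M A B c + gamma M A B c c"
proof -
  define t where "t i j = M i j * of_int (c i) * of_int (c j)" for i j
  have fA: "finite A" "finite B" using A B finite_subset by auto
  have split: "t i j = (if i \<notin> B \<and> j \<notin> B then t i j else 0)
      + (if (i \<in> B \<or> j \<in> B) \<and> i \<notin> A \<and> j \<notin> A then t i j else 0)
      + ((if i \<in> A \<and> j \<in> B then t i j else 0) + (if i \<in> B \<and> j \<in> A then t i j else 0))" for i j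
    using AB by auto
  have "qform s M c = (\<Sum>i<s. \<Sum>j<s. t i j)" unfolding qform_def t_def ..
  also have "\<dots> = alpha s M B c + beta s M A B c
       + ((\<Sum>i<s. \<Sum>j<s. if i \<in> A \<and> j \<in> B then t i j else 0) + (\<Sum>i<s. \<Sum>j<s. if i \<in> B \<and> j \<in> A then t i j else 0))"
    unfolding alpha_def beta_def t_def[symmetric]
    by (subst split) (simp only: sum.distrib)
  also have "(\<Sum>i<s. \<Sum>j<s. if i \<in> A \<and> j \<in> B then t i j else 0) = (\<Sum>i\<in>A. \<Sum>j\<in>B. t i j)"
  proof -
    have "(\<Sum>i<s. \<Sum>j<s. if i \<in> A \<and> j \<in> B then t i j else 0) = (\<Sum>i<s. if i \<in> A then (\<Sum>j\<in>B. t i j) else 0)"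
    proof (intro sum.cong refl)
      fix i assume "i \<in> {..<s}"
      show "(\<Sum>j<s. if i \<in> A \<and> j \<in> B then t i j else 0) = (if i \<in> A then (\<Sum>j\<in>B. t i j) else 0)"
        using B by (auto simp: sum.inter_filter[symmetric] Int_absorb1 intro!: sum.cong)
    qed
    also have "\<dots> = (\<Sum>i\<in>A. \<Sum>j\<in>B. t i j)"
      using A by (subst sum.inter_filter[symmetric]) (auto intro!: sum.cong)
    finally show ?thesis .
  qed
  also have "(\<Sum>i<s. \<Sum>j<s. if i \<in> B \<and> j \<in> A then t i j else 0) = (\<Sum>i\<in>A. \<Sum>j\<in>B. t i j)"
  proof -
    have "(\<Sum>i<s. \<Sum>j<s. if i \<in> B \<and> j \<in> A then t i j else 0) = (\<Sum>j<s. \<Sum>i<s. if i \<in> B \<and> j \<in> A then t i j else 0)"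
      by (rule sum.swap)
    also have "\<dots> = (\<Sum>j<s. \<Sum>i<s. if j \<in> A \<and> i \<in> B then t j i else 0)"
      by (intro sum.cong refl) (auto simp: t_def symm)
    also have "\<dots> = (\<Sum>j\<in>A. \<Sum>i\<in>B. t j i)"
    proof -
      have "(\<Sum>j<s. \<Sum>i<s. if j \<in> A \<and> i \<in> B then t j i else 0) = (\<Sum>j<s. if j \<in> A then (\<Sum>i\<in>B. t j i) else 0)"
      proof (intro sum.cong refl)
        fix j assume "j \<in> {..<s}"
        show "(\<Sum>i<s. if j \<in> A \<and> i \<in> B then t j i else 0) = (if j \<in> A then (\<Sum>i\<in>B. t j i) else 0)"
          using B by (auto simp: sum.inter_filter[symmetric] intro!: sum.cong)
      qed
      also have "\<dots> = (\<Sum>j\<in>A. \<Sum>i\<in>B. t j i)"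
        using A by (subst sum.inter_filter[symmetric]) (auto intro!: sum.cong)
      finally show ?thesis .
    qed
    finally show ?thesis .
  qed
  also have "(\<Sum>i\<in>A. \<Sum>j\<in>B. t i j) + (\<Sum>i\<in>A. \<Sum>j\<in>B. t i j) = gamma M A B c c"
    unfolding gamma_def t_def by (simp add: sum.distrib[symmetric] sum_distrib_left ac_simps)
  finally show ?thesis .
qed

lemma prod_if_const:
  assumes "finite A"
  shows "(\<Prod>i\<in>A. if P i then (c::real) else 0) = (if \<forall>i\<in>A. P i then c ^ card A else 0)"
  using assms by (induction A rule: finite_induct) auto

lemma gamma_int:
  assumes G: "\<And>i j. i \<in> A \<Longrightarrow> j \<in> B \<Longrightarrow> 2 * M i j = of_int (G i j)"
  shows "gamma M A B x y = (\<Sum>i\<in>A. of_int (x i * (\<Sum>j\<in>B. G i j * y j)))"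
  unfolding gamma_def
proof (intro sum.cong refl)
  fix i assume i: "i \<in> A"
  have "(\<Sum>j\<in>B. 2 * M i j * of_int (x i) * of_int (y j)) = (\<Sum>j\<in>B. of_int (x i) * of_int (G i j * y j))"
    by (intro sum.cong refl) (simp add: G[OF i, symmetric] ac_simps)
  also have "\<dots> = of_int (x i * (\<Sum>j\<in>B. G i j * y j))"
    by (simp add: sum_distrib_left)
  finally show "(\<Sum>j\<in>B. 2 * M i j * of_int (x i) * of_int (y j)) = of_int (x i * (\<Sum>j\<in>B. G i j * y j))" .
qed

lemma inner_bound:
  fixes a b :: int and y y' :: "nat \<Rightarrow> int"
  assumes G: "\<And>i j. i \<in> A \<Longrightarrow> j \<in> B \<Longrightarrow> 2 * M i j = of_int (G i j)"
    and fA: "finite A" and q: "q > 0" and W: "W > 0" and a: "coprime a (int q)"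
  shows "norm (\<Sum>x\<in>PiE A (\<lambda>_. X0 q W b). e (of_int a * gamma M A B x y / real q) * cnj (e (of_int a * gamma M A B x y' / real q)))
    \<le> (if \<forall>i\<in>A. int q dvd int W * (\<Sum>j\<in>B. G i j * (y j - y' j)) then real q ^ card A else 0)"
proof -
  define L where "L i = (\<Sum>j\<in>B. G i j * (y j - y' j))" for i
  have eq: "e (of_int a * gamma M A B x y / real q) * cnj (e (of_int a * gamma M A B x y' / real q))
      = (\<Prod>i\<in>A. e (of_int (a * x i * L i) / real q))" for x
  proof -
    have "of_int a * gamma M A B x y / real q - of_int a * gamma M A B x y' / real q
        = of_int a * (gamma M A B x y - gamma M A B x y') / real q" by (simp add: algebra_simps diff_divide_distrib)
    also have "gamma M A B x y - gamma M A B x y' = (\<Sum>i\<in>A. of_int (x i * L i))"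
    proof -
      have g1: "gamma M A B x y = (\<Sum>i\<in>A. of_int (x i * (\<Sum>j\<in>B. G i j * y j)))"
        by (rule gamma_int[OF G])
      have g2: "gamma M A B x y' = (\<Sum>i\<in>A. of_int (x i * (\<Sum>j\<in>B. G i j * y' j)))"
        by (rule gamma_int[OF G])
      have "gamma M A B x y - gamma M A B x y' = (\<Sum>i\<in>A. of_int (x i * (\<Sum>j\<in>B. G i j * y j)) - of_int (x i * (\<Sum>j\<in>B. G i j * y' j)))"
        unfolding g1 g2 by (simp only: sum_subtractf)
      also have "\<dots> = (\<Sum>i\<in>A. of_int (x i * L i))"
      proof (intro sum.cong refl)
        fix i
        have "(\<Sum>j\<in>B. G i j * y j) - (\<Sum>j\<in>B. G i j * y' j) = L i"
          unfolding L_def by (simp only: sum_subtractf[symmetric] right_diff_distrib)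
        then show "of_int (x i * (\<Sum>j\<in>B. G i j * y j)) - of_int (x i * (\<Sum>j\<in>B. G i j * y' j)) = (of_int (x i * L i) :: real)"
          by (metis of_int_diff right_diff_distrib)
      qed
      finally show ?thesis .
    qed
    also have "of_int a * (\<Sum>i\<in>A. of_int (x i * L i)) / real q = (\<Sum>i\<in>A. of_int (a * x i * L i) / real q)"
      by (simp add: sum_distrib_left sum_divide_distrib mult.assoc)
    finally have "of_int a * gamma M A B x y / real q - of_int a * gamma M A B x y' / real q
        = (\<Sum>i\<in>A. of_int (a * x i * L i) / real q)" .
    then show ?thesis by (simp add: e_diff[symmetric] e_sum[OF fA])
  qed
  have "(\<Sum>x\<in>PiE A (\<lambda>_. X0 q W b). e (of_int a * gamma M A B x y / real q) * cnj (e (of_int a * gamma M A B x y' / real q)))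
      = (\<Sum>x\<in>PiE A (\<lambda>_. X0 q W b). \<Prod>i\<in>A. e (of_int (a * x i * L i) / real q))"
    by (simp add: eq)
  also have "\<dots> = (\<Prod>i\<in>A. \<Sum>t\<in>X0 q W b. e (of_int (a * t * L i) / real q))"
    by (rule prod_sum_PiE[symmetric]) (auto simp: fA)
  finally have "norm (\<Sum>x\<in>PiE A (\<lambda>_. X0 q W b). e (of_int a * gamma M A B x y / real q) * cnj (e (of_int a * gamma M A B x y' / real q)))
      = (\<Prod>i\<in>A. norm (\<Sum>t\<in>X0 q W b. e (of_int (a * t * L i) / real q)))"
    by (simp add: prod_norm)
  also have "\<dots> \<le> (\<Prod>i\<in>A. if int q dvd int W * L i then real q else 0)"
    by (intro prod_mono conjI norm_ge_zero sum_X0[OF q W a])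
  also have "\<dots> = (if \<forall>i\<in>A. int q dvd int W * L i then real q ^ card A else 0)"
    by (rule prod_if_const[OF fA])
  finally show ?thesis unfolding L_def .
qed

lemma card_PiE_const: "finite I \<Longrightarrow> card (PiE I (\<lambda>_. X)) = card X ^ card I"
  by (simp add: card_PiE)

lemma count_Q:
  fixes D :: int and y :: "nat \<Rightarrow> int"
  assumes fB: "finite B" and q: "q > 0" and W: "W > 0" and D: "D \<noteq> 0"
    and P: "\<And>d N. \<forall>i\<in>A. N dvd (\<Sum>j\<in>B. G i j * d j) \<Longrightarrow> \<forall>j\<in>B. N dvd D * d j"
  shows "card {y' \<in> PiE B (\<lambda>_. Xs q W b). \<forall>i\<in>A. int q dvd int W * (\<Sum>j\<in>B. G i j * (y j - y' j))}
         \<le> (nat \<bar>D * int W\<bar> * W) ^ card B"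
proof -
  define T where "T v = {t \<in> {1..int (q * W)}. int q dvd (D * int W) * (v - t)}" for v
  have sub: "{y' \<in> PiE B (\<lambda>_. Xs q W b). \<forall>i\<in>A. int q dvd int W * (\<Sum>j\<in>B. G i j * (y j - y' j))}
      \<subseteq> PiE B (\<lambda>j. T (y j))"
  proof
    fix y' assume y': "y' \<in> {y' \<in> PiE B (\<lambda>_. Xs q W b). \<forall>i\<in>A. int q dvd int W * (\<Sum>j\<in>B. G i j * (y j - y' j))}"
    define d where "d j = int W * (y j - y' j)" for j
    have "\<forall>i\<in>A. int q dvd (\<Sum>j\<in>B. G i j * d j)"
    proof
      fix i assume "i \<in> A"
      then have "int q dvd int W * (\<Sum>j\<in>B. G i j * (y j - y' j))" using y' by auto
      also have "int W * (\<Sum>j\<in>B. G i j * (y j - y' j)) = (\<Sum>j\<in>B. G i j * d j)"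
        unfolding d_def by (simp add: sum_distrib_left ac_simps)
      finally show "int q dvd (\<Sum>j\<in>B. G i j * d j)" .
    qed
    then have dv: "\<forall>j\<in>B. int q dvd D * d j" by (rule P)
    show "y' \<in> PiE B (\<lambda>j. T (y j))"
    proof (rule PiE_I)
      fix j assume j: "j \<in> B"
      have "y' j \<in> Xs q W b" using y' j by (auto simp: PiE_iff)
      then have "1 \<le> y' j" "y' j \<le> int (q * W)" unfolding Xs_def by auto
      moreover have "int q dvd (D * int W) * (y j - y' j)" using dv j unfolding d_def by (simp add: ac_simps)
      ultimately show "y' j \<in> T (y j)" unfolding T_def by auto
    next
      fix j assume "j \<notin> B"
      then show "y' j = undefined" using y' by (auto simp: PiE_iff extensional_def)
    qed
  qed
  have fT: "finite (T v)" for v unfolding T_def by (rule finite_subset[of _ "{1..int (q*W)}"]) auto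
  have "card {y' \<in> PiE B (\<lambda>_. Xs q W b). \<forall>i\<in>A. int q dvd int W * (\<Sum>j\<in>B. G i j * (y j - y' j))}
      \<le> card (PiE B (\<lambda>j. T (y j)))"
    by (intro card_mono sub finite_PiE fB fT)
  also have "\<dots> = (\<Prod>j\<in>B. card (T (y j)))" by (rule card_PiE[OF fB])
  also have "\<dots> \<le> (\<Prod>j\<in>B. nat \<bar>D * int W\<bar> * W)"
  proof (intro prod_mono conjI)
    fix j
    have "D * int W \<noteq> 0" using D W by simp
    then show "card (T (y j)) \<le> nat \<bar>D * int W\<bar> * W" unfolding T_def by (rule count_T[OF q W])
  qed simp
  also have "\<dots> = (nat \<bar>D * int W\<bar> * W) ^ card B" by simp
  finally show ?thesis .
qed

lemma R_bound:
  fixes D a b :: int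
  assumes G: "\<And>i j. i \<in> A \<Longrightarrow> j \<in> B \<Longrightarrow> 2 * M i j = of_int (G i j)"
    and fA: "finite A" and fB: "finite B" and q: "q > 0" and W: "W > 0" and a: "coprime a (int q)" and D: "D \<noteq> 0"
    and P: "\<And>d N. \<forall>i\<in>A. N dvd (\<Sum>j\<in>B. G i j * d j) \<Longrightarrow> \<forall>j\<in>B. N dvd D * d j"
  shows "(\<Sum>y\<in>PiE B (\<lambda>_. Xs q W b). \<Sum>y'\<in>PiE B (\<lambda>_. Xs q W b).
           norm (\<Sum>x\<in>PiE A (\<lambda>_. X0 q W b). e (of_int a * gamma M A B x y / real q) * cnj (e (of_int a * gamma M A B x y' / real q))))
        \<le> real q ^ card A * (real (card (Xs q W b)) ^ card B * real (nat \<bar>D * int W\<bar> * W) ^ card B)"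
proof -
  define Py where "Py = PiE B (\<lambda>_. Xs q W b)"
  define Q where "Q y y' = (\<forall>i\<in>A. int q dvd int W * (\<Sum>j\<in>B. G i j * (y j - y' j)))" for y y' :: "nat \<Rightarrow> int"
  define \<kappa> where "\<kappa> = nat \<bar>D * int W\<bar> * W"
  have fPy: "finite Py" unfolding Py_def by (intro finite_PiE fB) simp
  have "(\<Sum>y\<in>Py. \<Sum>y'\<in>Py. norm (\<Sum>x\<in>PiE A (\<lambda>_. X0 q W b). e (of_int a * gamma M A B x y / real q) * cnj (e (of_int a * gamma M A B x y' / real q))))
      \<le> (\<Sum>y\<in>Py. \<Sum>y'\<in>Py. if Q y y' then real q ^ card A else 0)"
    unfolding Q_def by (intro sum_mono inner_bound[OF G fA q W a])
  also have "\<dots> = (\<Sum>y\<in>Py. real q ^ card A * real (card {y'\<in>Py. Q y y'}))"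
  proof (intro sum.cong refl)
    fix y
    have "(\<Sum>y'\<in>Py. if Q y y' then real q ^ card A else 0) = (\<Sum>y'\<in>{y'\<in>Py. Q y y'}. real q ^ card A)"
      by (rule sum.inter_filter[OF fPy, symmetric])
    also have "\<dots> = real q ^ card A * real (card {y'\<in>Py. Q y y'})" by simp
    finally show "(\<Sum>y'\<in>Py. if Q y y' then real q ^ card A else 0) = real q ^ card A * real (card {y'\<in>Py. Q y y'})" .
  qed
  also have "\<dots> \<le> (\<Sum>y\<in>Py. real q ^ card A * real (\<kappa> ^ card B))"
  proof (intro sum_mono mult_left_mono)
    fix y assume "y \<in> Py"
    have "card {y'\<in>Py. Q y y'} \<le> \<kappa> ^ card B"
      unfolding Py_def Q_def \<kappa>_def by (rule count_Q[OF fB q W D P])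
    then show "real (card {y'\<in>Py. Q y y'}) \<le> real (\<kappa> ^ card B)" by (simp only: of_nat_le_iff)
  qed simp
  also have "\<dots> = real (card Py) * (real q ^ card A * real (\<kappa> ^ card B))" by simp
  also have "card Py = card (Xs q W b) ^ card B" unfolding Py_def by (rule card_PiE_const[OF fB])
  finally show ?thesis unfolding Py_def \<kappa>_def by (simp add: ac_simps)
qed

lemma main_E:
  fixes D a b :: int and G :: "nat \<Rightarrow> nat \<Rightarrow> int"
  assumes symm: "\<And>i j. i < s \<Longrightarrow> j < s \<Longrightarrow> M i j = M j i"
    and A: "A \<subseteq> {..<s}" and B: "B \<subseteq> {..<s}" and AB: "A \<inter> B = {}"
    and G: "\<And>i j. i \<in> A \<Longrightarrow> j \<in> B \<Longrightarrow> 2 * M i j = of_int (G i j)"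
    and D: "D \<noteq> 0"
    and P: "\<And>d N. \<forall>i\<in>A. N dvd (\<Sum>j\<in>B. G i j * d j) \<Longrightarrow> \<forall>j\<in>B. N dvd D * d j"
    and q: "q > 0" and W: "W > 0" and a: "coprime a (int q)"
  shows "norm (S_star s M W b q a) \<le> real (card (Xs q W b)) ^ (s - card A - card B) *
     sqrt (real (card (Xs q W b)) ^ card A * (real q ^ card A * (real (card (Xs q W b)) ^ card B * real (nat \<bar>D * int W\<bar> * W) ^ card B)))"
proof -
  define X where "X = Xs q W b"
  define Z where "Z = {..<s} - (A \<union> B)"
  define R0 where "R0 = real q ^ card A * (real (card X) ^ card B * real (nat \<bar>D * int W\<bar> * W) ^ card B)"
  have fA: "finite A" and fB: "finite B" using A B finite_subset by auto
  have fX: "finite X" unfolding X_def by simp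
  have U: "{..<s} = Z \<union> (A \<union> B)" and ZAB: "Z \<inter> (A \<union> B) = {}" unfolding Z_def using A B by auto
  define \<phi> where "\<phi> c = e (of_int a * qform s M c / real q)" for c
  define g where "g z x = e (of_int a * alpha s M B (merge Z z (merge A x (\<lambda>_. 0))) / real q)" for z x
  define h where "h z y = e (of_int a * beta s M A B (merge Z z (merge A (\<lambda>_. 0) y)) / real q)" for z y
  define K where "K x y = e (of_int a * gamma M A B x y / real q)" for x y
  have S_eq: "S_star s M W b q a = (\<Sum>c\<in>PiE {..<s} (\<lambda>_. X). \<phi> c)"
    unfolding S_star_def X_def Xs_def \<phi>_def ..
  also have "\<dots> = (\<Sum>z\<in>PiE Z (\<lambda>_. X). \<Sum>x\<in>PiE A (\<lambda>_. X). \<Sum>y\<in>PiE B (\<lambda>_. X). \<phi> (merge Z z (merge A x y)))"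
    unfolding U by (simp only: sum_split_PiE[OF ZAB] sum_split_PiE[OF AB])
  also have "\<dots> = (\<Sum>z\<in>PiE Z (\<lambda>_. X). \<Sum>x\<in>PiE A (\<lambda>_. X). \<Sum>y\<in>PiE B (\<lambda>_. X). g z x * h z y * K x y)"
  proof (intro sum.cong refl)
    fix z x y assume z: "z \<in> PiE Z (\<lambda>_. X)" and x: "x \<in> PiE A (\<lambda>_. X)" and y: "y \<in> PiE B (\<lambda>_. X)"
    define c where "c = merge Z z (merge A x y)"
    have cA: "c i = x i" if "i \<in> A" for i using that ZAB unfolding c_def merge_def by auto
    have cB: "c i = y i" if "i \<in> B" for i using that ZAB AB unfolding c_def merge_def by auto
    have "alpha s M B c = alpha s M B (merge Z z (merge A x (\<lambda>_. 0)))"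
      unfolding alpha_def
    proof (intro sum.cong refl)
      fix i j assume "i \<in> {..<s}" "j \<in> {..<s}"
      then show "(if i \<notin> B \<and> j \<notin> B then M i j * of_int (c i) * of_int (c j) else 0) =
        (if i \<notin> B \<and> j \<notin> B then M i j * of_int (merge Z z (merge A x (\<lambda>_. 0)) i) * of_int (merge Z z (merge A x (\<lambda>_. 0)) j) else 0)"
        unfolding c_def merge_def Z_def by auto
    qed
    moreover have "beta s M A B c = beta s M A B (merge Z z (merge A (\<lambda>_. 0) y))"
      unfolding beta_def
    proof (intro sum.cong refl)
      fix i j assume "i \<in> {..<s}" "j \<in> {..<s}"
      then show "(if (i \<in> B \<or> j \<in> B) \<and> i \<notin> A \<and> j \<notin> A then M i j * of_int (c i) * of_int (c j) else 0) =
        (if (i \<in> B \<or> j \<in> B) \<and> i \<notin> A \<and> j \<notin> A then M i j * of_int (merge Z z (merge A (\<lambda>_. 0) y) i) * of_int (merge Z z (merge A (\<lambda>_. 0) y) j) else 0)"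
        unfolding c_def merge_def Z_def by auto
    qed
    moreover have "gamma M A B c c = gamma M A B x y"
      unfolding gamma_def by (intro sum.cong refl) (simp add: cA cB)
    ultimately have "qform s M c = alpha s M B (merge Z z (merge A x (\<lambda>_. 0))) + beta s M A B (merge Z z (merge A (\<lambda>_. 0) y)) + gamma M A B x y"
      using qform_decomp[OF symm A B AB, where c = c] by simp
    then show "\<phi> (merge Z z (merge A x y)) = g z x * h z y * K x y"
      unfolding \<phi>_def g_def h_def K_def c_def[symmetric]
      by (simp add: e_add[symmetric] distrib_left add_divide_distrib)
  qed
  finally have S2: "S_star s M W b q a = (\<Sum>z\<in>PiE Z (\<lambda>_. X). \<Sum>x\<in>PiE A (\<lambda>_. X). \<Sum>y\<in>PiE B (\<lambda>_. X). g z x * h z y * K x y)" .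
  have inner: "norm (\<Sum>x\<in>PiE A (\<lambda>_. X). \<Sum>y\<in>PiE B (\<lambda>_. X). g z x * h z y * K x y)
      \<le> sqrt (real (card X) ^ card A * R0)" for z
  proof -
    have sub: "PiE A (\<lambda>_. X) \<subseteq> PiE A (\<lambda>_. X0 q W b)"
      using Xs_sub_X0[OF W, of q b] unfolding X_def Xs_def by (auto simp: PiE_iff)
    have "(norm (\<Sum>x\<in>PiE A (\<lambda>_. X). \<Sum>y\<in>PiE B (\<lambda>_. X). g z x * h z y * K x y))\<^sup>2
        \<le> real (card (PiE A (\<lambda>_. X))) * (\<Sum>y\<in>PiE B (\<lambda>_. X). \<Sum>y'\<in>PiE B (\<lambda>_. X). norm (\<Sum>x\<in>PiE A (\<lambda>_. X0 q W b). K x y * cnj (K x y')))"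
      by (rule bilinear_CS[OF _ sub]) (auto simp: g_def h_def fA fB fX intro!: finite_PiE)
    also have "\<dots> \<le> real (card X) ^ card A * R0"
    proof -
      have "(\<Sum>y\<in>PiE B (\<lambda>_. X). \<Sum>y'\<in>PiE B (\<lambda>_. X). norm (\<Sum>x\<in>PiE A (\<lambda>_. X0 q W b). K x y * cnj (K x y'))) \<le> R0"
        unfolding K_def R0_def X_def by (rule R_bound[OF G fA fB q W a D P])
      moreover have "card (PiE A (\<lambda>_. X)) = card X ^ card A" by (rule card_PiE_const[OF fA])
      ultimately show ?thesis by (simp add: mult_left_mono)
    qed
    finally show ?thesis by (simp add: real_le_rsqrt)
  qed
  have "norm (S_star s M W b q a) \<le> (\<Sum>z\<in>PiE Z (\<lambda>_. X). norm (\<Sum>x\<in>PiE A (\<lambda>_. X). \<Sum>y\<in>PiE B (\<lambda>_. X). g z x * h z y * K x y))"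
    unfolding S2 by (rule norm_sum)
  also have "\<dots> \<le> (\<Sum>z\<in>PiE Z (\<lambda>_. X). sqrt (real (card X) ^ card A * R0))"
    by (intro sum_mono inner)
  also have "\<dots> = real (card X) ^ card Z * sqrt (real (card X) ^ card A * R0)"
    using card_PiE_const[of Z X] Z_def by simp
  also have "card Z = s - card A - card B"
  proof -
    have "card (Z \<union> (A \<union> B)) = card Z + card (A \<union> B)" using ZAB fA fB Z_def by (intro card_Un_disjoint) auto
    moreover have "card (A \<union> B) = card A + card B" using AB fA fB by (intro card_Un_disjoint) auto
    moreover have "card (Z \<union> (A \<union> B)) = s" using U[symmetric] by simp
    ultimately show ?thesis by linarith
  qed
  finally show ?thesis unfolding X_def R0_def .
qed

lemma (in vec_space) indep_cols:
  assumes B0: "B0 \<in> carrier_mat n nc" and rk: "rank B0 \<ge> k"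
  shows "\<exists>ls. inj_on ls {..<k} \<and> ls ` {..<k} \<subseteq> {..<nc} \<and>
     (\<forall>v \<in> carrier_vec k. mat n k (\<lambda>(i,m). B0 $$ (i, ls m)) *\<^sub>v v = 0\<^sub>v n \<longrightarrow> v = 0\<^sub>v k)"
proof -
  obtain S where max: "maximal S (\<lambda>T. T \<subseteq> set (cols B0) \<and> lin_indpt T)"
    using maximal_exists[of "(\<lambda>T. T \<subseteq> set (cols B0) \<and> lin_indpt T)" "card (set (cols B0))" "{}"]
    by (meson List.finite_set card_mono empty_iff empty_subsetI finite_lin_indpt2 rev_finite_subset)
  have rS: "rank B0 = card S" by (rule rank_card_indpt[OF B0 max])
  have Ssub: "S \<subseteq> set (cols B0)" and Sli: "lin_indpt S" using max unfolding maximal_def by auto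
  obtain U where U: "U \<subseteq> S" "card U = k" "finite U"
    using obtain_subset_with_card_n[of k S] rk rS by auto
  have Uli: "lin_indpt U" using subset_li_is_li[OF Sli U(1)] .
  obtain u where u: "bij_betw u {0..<k} U" using ex_bij_betw_nat_finite[OF U(3)] U(2) by auto
  have um: "\<exists>l. l < nc \<and> u m = col B0 l" if "m < k" for m
  proof -
    have "u m \<in> U" using u that by (auto simp: bij_betw_def)
    then have "u m \<in> set (cols B0)" using U(1) Ssub by blast
    then obtain l where "l < length (cols B0)" "u m = cols B0 ! l" by (auto simp: in_set_conv_nth)
    then show ?thesis using B0 by auto
  qed
  define ls where "ls m = (SOME l. l < nc \<and> u m = col B0 l)" for m
  have ls: "ls m < nc" "u m = col B0 (ls m)" if "m < k" for m
    using someI_ex[OF um[OF that]] unfolding ls_def by auto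
  have inj: "inj_on ls {..<k}"
  proof (rule inj_onI)
    fix m1 m2 assume "m1 \<in> {..<k}" "m2 \<in> {..<k}" "ls m1 = ls m2"
    then have "u m1 = u m2" using ls by auto
    then show "m1 = m2" using u \<open>m1 \<in> {..<k}\<close> \<open>m2 \<in> {..<k}\<close> by (auto simp: bij_betw_def inj_on_def)
  qed
  define C where "C = mat n k (\<lambda>(i,m). B0 $$ (i, ls m))"
  have C: "C \<in> carrier_mat n k" unfolding C_def by simp
  have colC: "col C m = u m" if "m < k" for m
  proof -
    have "col C m = col B0 (ls m)"
      unfolding C_def using B0 ls(1)[OF that] that by (auto simp: col_def)
    then show ?thesis using ls(2)[OF that] by simp
  qed
  have colsC: "cols C = map u [0..<k]"
    by (rule nth_equalityI) (use C colC in auto)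
  have distC: "distinct (cols C)" unfolding colsC using u
    by (simp add: distinct_map bij_betw_def atLeast0LessThan)
  have setC: "set (cols C) = U" unfolding colsC using u by (simp add: bij_betw_def)
  have "\<forall>v \<in> carrier_vec k. C *\<^sub>v v = 0\<^sub>v n \<longrightarrow> v = 0\<^sub>v k"
  proof (intro ballI impI)
    fix v assume v: "v \<in> carrier_vec k" "C *\<^sub>v v = 0\<^sub>v n"
    show "v = 0\<^sub>v k"
    proof (rule ccontr)
      assume "v \<noteq> 0\<^sub>v k"
      from lin_depI[OF C v(1) this v(2) distC] have "lin_dep U" unfolding setC .
      then show False using Uli by simp
    qed
  qed
  then show ?thesis using inj ls(1) unfolding C_def by auto
qed

lemma gram_inverse:
  fixes F :: "nat \<Rightarrow> nat \<Rightarrow> int" and r k :: nat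
  assumes inj: "\<forall>v \<in> carrier_vec k. (\<forall>i<r. (\<Sum>m<k. of_int (F i m) * v $ m :: real) = 0) \<longrightarrow> v = 0\<^sub>v k"
  shows "\<exists>D E. D \<noteq> 0 \<and> (\<forall>m0<k. \<forall>\<delta>. (\<Sum>i<r. E m0 i * (\<Sum>m<k. F i m * \<delta> m)) = D * \<delta> m0)"
proof -
  define \<Gamma> :: "int mat" where "\<Gamma> = mat k k (\<lambda>(m,m'). \<Sum>i<r. F i m * F i m')"
  have \<Gamma>: "\<Gamma> \<in> carrier_mat k k" unfolding \<Gamma>_def by simp
  define D where "D = det \<Gamma>"
  define Adj where "Adj = adj_mat \<Gamma>"
  have Adj: "Adj \<in> carrier_mat k k" "Adj * \<Gamma> = D \<cdot>\<^sub>m 1\<^sub>m k" unfolding Adj_def D_def using adj_mat[OF \<Gamma>] by auto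
  define E where "E m0 i = (\<Sum>m'<k. Adj $$ (m0, m') * F i m')" for m0 i
  have AG: "(\<Sum>m'<k. Adj $$ (m0, m') * \<Gamma> $$ (m', m)) = (if m0 = m then D else 0)" if "m0 < k" "m < k" for m0 m
  proof -
    have "(Adj * \<Gamma>) $$ (m0, m) = (\<Sum>m'<k. Adj $$ (m0, m') * \<Gamma> $$ (m', m))"
      using Adj(1) \<Gamma> that by (simp add: scalar_prod_def atLeast0LessThan)
    moreover have "(Adj * \<Gamma>) $$ (m0, m) = D * (if m0 = m then 1 else 0)" using Adj(2) that by simp
    ultimately show ?thesis by (cases "m0 = m") simp_all
  qed
  have ident: "(\<Sum>i<r. E m0 i * (\<Sum>m<k. F i m * \<delta> m)) = D * \<delta> m0" if m0: "m0 < k" for m0 \<delta>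
  proof -
    have "(\<Sum>i<r. E m0 i * (\<Sum>m<k. F i m * \<delta> m)) = (\<Sum>i<r. \<Sum>m'<k. \<Sum>m<k. Adj $$ (m0, m') * (F i m' * F i m) * \<delta> m)"
      unfolding E_def by (simp add: sum_product mult.assoc)
    also have "\<dots> = (\<Sum>m'<k. \<Sum>i<r. \<Sum>m<k. Adj $$ (m0, m') * (F i m' * F i m) * \<delta> m)"
      by (rule sum.swap)
    also have "\<dots> = (\<Sum>m'<k. \<Sum>m<k. \<Sum>i<r. Adj $$ (m0, m') * (F i m' * F i m) * \<delta> m)"
      by (intro sum.cong refl sum.swap)
    also have "\<dots> = (\<Sum>m'<k. \<Sum>m<k. Adj $$ (m0, m') * \<Gamma> $$ (m', m) * \<delta> m)"
    proof (intro sum.cong refl)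
      fix m' m assume "m' \<in> {..<k}" "m \<in> {..<k}"
      then have "\<Gamma> $$ (m', m) = (\<Sum>i<r. F i m' * F i m)" unfolding \<Gamma>_def by simp
      then show "(\<Sum>i<r. Adj $$ (m0, m') * (F i m' * F i m) * \<delta> m) = Adj $$ (m0, m') * \<Gamma> $$ (m', m) * \<delta> m"
        by (simp add: sum_distrib_left sum_distrib_right)
    qed
    also have "\<dots> = (\<Sum>m<k. \<Sum>m'<k. Adj $$ (m0, m') * \<Gamma> $$ (m', m) * \<delta> m)"
      by (rule sum.swap)
    also have "\<dots> = (\<Sum>m<k. (if m0 = m then D else 0) * \<delta> m)"
    proof (intro sum.cong refl)
      fix m assume "m \<in> {..<k}"
      then show "(\<Sum>m'<k. Adj $$ (m0, m') * \<Gamma> $$ (m', m) * \<delta> m) = (if m0 = m then D else 0) * \<delta> m"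
        using AG[OF m0, of m] by (simp add: sum_distrib_right[symmetric])
    qed
    also have "\<dots> = (\<Sum>m<k. if m = m0 then D * \<delta> m else 0)"
      by (intro sum.cong refl) auto
    also have "\<dots> = D * \<delta> m0" using m0 by (simp add: sum.delta)
    finally show ?thesis .
  qed
  have D0: "D \<noteq> 0"
  proof
    assume D: "D = 0"
    define \<Gamma>R :: "real mat" where "\<Gamma>R = map_mat real_of_int \<Gamma>"
    have \<Gamma>R: "\<Gamma>R \<in> carrier_mat k k" unfolding \<Gamma>R_def using \<Gamma> by simp
    have "det \<Gamma>R = real_of_int (det \<Gamma>)" unfolding \<Gamma>R_def by (rule of_int_hom.hom_det)
    then have "det \<Gamma>R = 0" using D D_def by simp
    then obtain v where v: "v \<in> carrier_vec k" "v \<noteq> 0\<^sub>v k" "\<Gamma>R *\<^sub>v v = 0\<^sub>v k"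
      using det_0_iff_vec_prod_zero_field[OF \<Gamma>R] by auto
    define w where "w i = (\<Sum>m<k. of_int (F i m) * v $ m :: real)" for i
    have "(\<Sum>i<r. (w i)\<^sup>2) = (\<Sum>m0<k. v $ m0 * (\<Gamma>R *\<^sub>v v) $ m0)"
    proof -
      have "(\<Sum>i<r. (w i)\<^sup>2) = (\<Sum>i<r. \<Sum>m0<k. \<Sum>m<k. v $ m0 * (of_int (F i m0) * of_int (F i m) * v $ m))"
        unfolding w_def power2_eq_square by (simp add: sum_product ac_simps)
      also have "\<dots> = (\<Sum>m0<k. \<Sum>i<r. \<Sum>m<k. v $ m0 * (of_int (F i m0) * of_int (F i m) * v $ m))"
        by (rule sum.swap)
      also have "\<dots> = (\<Sum>m0<k. \<Sum>m<k. \<Sum>i<r. v $ m0 * (of_int (F i m0) * of_int (F i m) * v $ m))"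
        by (intro sum.cong refl sum.swap)
      also have "\<dots> = (\<Sum>m0<k. v $ m0 * (\<Sum>m<k. \<Gamma>R $$ (m0, m) * v $ m))"
      proof (intro sum.cong refl)
        fix m0 assume m0: "m0 \<in> {..<k}"
        have "(\<Sum>m<k. \<Sum>i<r. v $ m0 * (of_int (F i m0) * of_int (F i m) * v $ m)) = (\<Sum>m<k. v $ m0 * (\<Gamma>R $$ (m0, m) * v $ m))"
        proof (intro sum.cong refl)
          fix m assume "m \<in> {..<k}"
          then have "\<Gamma>R $$ (m0, m) = (\<Sum>i<r. of_int (F i m0) * of_int (F i m))"
            unfolding \<Gamma>R_def \<Gamma>_def using m0 by simp
          then show "(\<Sum>i<r. v $ m0 * (of_int (F i m0) * of_int (F i m) * v $ m)) = v $ m0 * (\<Gamma>R $$ (m0, m) * v $ m)"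
            by (simp add: sum_distrib_left sum_distrib_right)
        qed
        then show "(\<Sum>m<k. \<Sum>i<r. v $ m0 * (of_int (F i m0) * of_int (F i m) * v $ m)) = v $ m0 * (\<Sum>m<k. \<Gamma>R $$ (m0, m) * v $ m)"
          by (simp add: sum_distrib_left)
      qed
      also have "\<dots> = (\<Sum>m0<k. v $ m0 * (\<Gamma>R *\<^sub>v v) $ m0)"
      proof (intro sum.cong refl)
        fix m0 assume "m0 \<in> {..<k}"
        then show "v $ m0 * (\<Sum>m<k. \<Gamma>R $$ (m0, m) * v $ m) = v $ m0 * (\<Gamma>R *\<^sub>v v) $ m0"
          using \<Gamma>R v(1) by (simp add: scalar_prod_def atLeast0LessThan row_def)
      qed
      finally show ?thesis .
    qed
    also have "\<dots> = 0" using v(3) by simp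
    finally have "(\<Sum>i<r. (w i)\<^sup>2) = 0" .
    then have "\<forall>i\<in>{..<r}. (w i)\<^sup>2 = 0" by (subst sum_nonneg_eq_0_iff[symmetric]) auto
    then have "\<forall>i<r. w i = 0" by simp
    then have "v = 0\<^sub>v k" using inj v(1) unfolding w_def by blast
    then show False using v(2) by simp
  qed
  show ?thesis using D0 ident by blast
qed

lemma rank_off_data:
  fixes s :: nat and M :: "nat \<Rightarrow> nat \<Rightarrow> real"
  assumes int_off: "\<And>i j. i < s \<Longrightarrow> j < s \<Longrightarrow> 2 * M i j \<in> \<int>"
    and rk: "rank_off s M \<ge> 5"
  shows "\<exists>A B G D. A \<subseteq> {..<s} \<and> B \<subseteq> {..<s} \<and> A \<inter> B = {} \<and> card B = 5 \<and>
     (\<forall>i\<in>A. \<forall>j\<in>B. 2 * M i j = of_int (G i j)) \<and> D \<noteq> (0::int) \<and>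
     (\<forall>d N. (\<forall>i\<in>A. N dvd (\<Sum>j\<in>B. G i j * d j)) \<longrightarrow> (\<forall>j\<in>B. N dvd D * d j))"
proof -
  define R where "R = {vec_space.rank r (mat r r (\<lambda>(k, l). M (I k) (J l)) :: real mat) | r I J.
      inj_on I {..<r} \<and> inj_on J {..<r} \<and> I ` {..<r} \<subseteq> {..<s} \<and> J ` {..<r} \<subseteq> {..<s}
      \<and> I ` {..<r} \<inter> J ` {..<r} = {}}"
  have "R \<subseteq> {..s}"
  proof
    fix x assume "x \<in> R"
    then obtain r I J where x: "x = vec_space.rank r (mat r r (\<lambda>(k, l). M (I k) (J l)) :: real mat)"
      and c: "inj_on I {..<r}" "I ` {..<r} \<subseteq> {..<s}" unfolding R_def by blast
    have "x \<le> r" unfolding x by (rule vec_space.rank_le_nc) simp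
    moreover have "r \<le> s"
    proof -
      have "card (I ` {..<r}) \<le> card {..<s}" using c(2) by (intro card_mono) auto
      then show ?thesis using card_image[OF c(1)] by simp
    qed
    ultimately show "x \<in> {..s}" by simp
  qed
  then have finR: "finite R" by (rule finite_subset) simp
  have "vec_space.rank 0 (mat 0 0 (\<lambda>(k, l). M ((\<lambda>_. 0) k) ((\<lambda>_. 0) l)) :: real mat) \<in> R"
    unfolding R_def by (rule CollectI, intro exI[of _ 0] exI[of _ "\<lambda>_. 0"]) simp
  then have neR: "R \<noteq> {}" by auto
  have "Max R \<in> R" by (rule Max_in[OF finR neR])
  moreover have "Max R = rank_off s M" unfolding R_def rank_off_def ..
  ultimately have "rank_off s M \<in> R" by simp
  then obtain r I J where rI: "rank_off s M = vec_space.rank r (mat r r (\<lambda>(k, l). M (I k) (J l)) :: real mat)"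
    and cI: "inj_on I {..<r}" "inj_on J {..<r}" "I ` {..<r} \<subseteq> {..<s}" "J ` {..<r} \<subseteq> {..<s}"
      "I ` {..<r} \<inter> J ` {..<r} = {}"
    unfolding R_def by blast
  define B0 :: "real mat" where "B0 = mat r r (\<lambda>(k, l). M (I k) (J l))"
  have B0: "B0 \<in> carrier_mat r r" unfolding B0_def by simp
  have "vec_space.rank r B0 \<ge> 5" using rk rI B0_def by simp
  from vec_space.indep_cols[OF B0 this] obtain ls where ls: "inj_on ls {..<5}" "ls ` {..<5} \<subseteq> {..<r}"
    "\<forall>v \<in> carrier_vec 5. mat r 5 (\<lambda>(i,m). B0 $$ (i, ls m)) *\<^sub>v v = 0\<^sub>v r \<longrightarrow> v = 0\<^sub>v 5" by blast
  define G where "G i j = \<lfloor>2 * M i j\<rfloor>" for i j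
  have Gint: "2 * M i j = of_int (G i j)" if "i < s" "j < s" for i j
    using int_off[OF that] unfolding G_def by (auto elim!: Ints_cases)
  define F where "F k m = G (I k) (J (ls m))" for k m
  have Fr: "of_int (F k m) = 2 * M (I k) (J (ls m))" if "k < r" "m < 5" for k m
  proof -
    have "ls m < r" using ls(2) that by auto
    then have "I k < s" "J (ls m) < s" using cI(3,4) that by auto
    then show ?thesis unfolding F_def using Gint by simp
  qed
  have injF: "\<forall>v \<in> carrier_vec 5. (\<forall>i<r. (\<Sum>m<5. of_int (F i m) * v $ m :: real) = 0) \<longrightarrow> v = 0\<^sub>v 5"
  proof (intro ballI impI)
    fix v :: "real vec" assume v: "v \<in> carrier_vec 5" "\<forall>i<r. (\<Sum>m<5. of_int (F i m) * v $ m :: real) = 0"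
    have "mat r 5 (\<lambda>(i,m). B0 $$ (i, ls m)) *\<^sub>v v = 0\<^sub>v r"
    proof (rule eq_vecI)
      fix i assume "i < dim_vec (0\<^sub>v r :: real vec)"
      then have i: "i < r" by simp
      have "(mat r 5 (\<lambda>(i,m). B0 $$ (i, ls m)) *\<^sub>v v) $ i = (\<Sum>m<5. B0 $$ (i, ls m) * v $ m)"
        using i v(1) by (simp add: scalar_prod_def atLeast0LessThan row_def)
      also have "\<dots> = (\<Sum>m<5. (1/2) * (of_int (F i m) * v $ m))"
      proof (intro sum.cong refl)
        fix m :: nat assume m: "m \<in> {..<5}"
        then have "ls m < r" using ls(2) by auto
        then have "B0 $$ (i, ls m) = M (I i) (J (ls m))" unfolding B0_def using i by simp
        then show "B0 $$ (i, ls m) * v $ m = (1/2) * (of_int (F i m) * v $ m)" using Fr[OF i] m by simp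
      qed
      also have "\<dots> = (1/2) * (\<Sum>m<5. of_int (F i m) * v $ m)" by (simp only: sum_distrib_left)
      also have "\<dots> = 0" using v(2) i by simp
      finally show "(mat r 5 (\<lambda>(i,m). B0 $$ (i, ls m)) *\<^sub>v v) $ i = 0\<^sub>v r $ i" using i by simp
    qed simp
    then show "v = 0\<^sub>v 5" using ls(3) v(1) by blast
  qed
  obtain D E where DE: "D \<noteq> 0" "\<forall>m0<5. \<forall>\<delta>. (\<Sum>i<r. E m0 i * (\<Sum>m<5. F i m * \<delta> m)) = D * \<delta> m0"
    using gram_inverse[OF injF] by blast
  define A where "A = I ` {..<r}"
  define B where "B = (\<lambda>m. J (ls m)) ` {..<5}"
  have injB: "inj_on (\<lambda>m. J (ls m)) {..<5}"
    using ls(1,2) cI(2) by (auto simp: inj_on_def subset_iff)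
  have BJ: "B \<subseteq> J ` {..<r}" unfolding B_def using ls(2) by auto
  have AB: "A \<subseteq> {..<s}" "B \<subseteq> {..<s}" "A \<inter> B = {}" "card B = 5"
    using cI(3) unfolding A_def apply blast
    using BJ cI(4) apply blast
    using BJ cI(5) unfolding A_def apply blast
    using injB unfolding B_def by (simp add: card_image)
  have GAB: "\<forall>i\<in>A. \<forall>j\<in>B. 2 * M i j = of_int (G i j)" using AB Gint by blast
  have P: "\<forall>d N. (\<forall>i\<in>A. N dvd (\<Sum>j\<in>B. G i j * d j)) \<longrightarrow> (\<forall>j\<in>B. N dvd D * d j)"
  proof (intro allI impI ballI)
    fix d N j assume H: "\<forall>i\<in>A. N dvd (\<Sum>j\<in>B. G i j * d j)" and j: "j \<in> B"
    then obtain m0 where m0: "m0 < 5" "j = J (ls m0)" unfolding B_def by auto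
    define \<delta> where "\<delta> m = d (J (ls m))" for m
    have "N dvd (\<Sum>m<5. F k m * \<delta> m)" if k: "k < r" for k
    proof -
      have "(\<Sum>j\<in>B. G (I k) j * d j) = (\<Sum>m<5. F k m * \<delta> m)"
        unfolding B_def F_def \<delta>_def by (simp add: sum.reindex[OF injB])
      moreover have "I k \<in> A" using k unfolding A_def by auto
      ultimately show ?thesis using H by metis
    qed
    then have "N dvd (\<Sum>i<r. E m0 i * (\<Sum>m<5. F i m * \<delta> m))"
      by (intro dvd_sum) (simp add: dvd_mult)
    then show "N dvd D * d j" using DE(2) m0 unfolding \<delta>_def by simp
  qed
  show ?thesis using AB GAB DE(1) P by blast
qed

lemma totient_mult_ge: "totient q * totient W \<le> totient (q * W)"
proof (cases "q = 0 \<or> W = 0")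
  case True
  then show ?thesis by auto
next
  case False
  then have g: "gcd q W > 0" by simp
  then have tg: "totient (gcd q W) > 0" by simp
  have e: "totient (q * W) * totient (gcd q W) = totient q * totient W * gcd q W" by (rule totient_gcd)
  have "totient q * totient W * totient (gcd q W) \<le> totient q * totient W * gcd q W"
    by (intro mult_left_mono totient_le) simp
  then have "totient q * totient W * totient (gcd q W) \<le> totient (q * W) * totient (gcd q W)"
    using e by simp
  then show ?thesis using mult_le_cancel2[of "totient q * totient W" "totient (gcd q W)" "totient (q * W)"] tg by blast
qed

theorem lemma2p5:
  fixes s :: nat and M :: "nat \<Rightarrow> nat \<Rightarrow> real"
  assumes symm: "\<And>i j. i < s \<Longrightarrow> j < s \<Longrightarrow> M i j = M j i"
    and int_diag: "\<And>i. i < s \<Longrightarrow> M i i \<in> \<int>"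
    and int_off: "\<And>i j. i < s \<Longrightarrow> j < s \<Longrightarrow> 2 * M i j \<in> \<int>"
    and rk: "rank_off s M \<ge> 5"
  shows "\<forall>\<epsilon>>0. \<exists>C. \<forall>W q :: nat. \<forall>b :: int. W > 0 \<longrightarrow> q > 0 \<longrightarrow> coprime b (int W) \<longrightarrow>
           norm (B_star s M W b q)
             \<le> C * real W ^ 5 / real (totient W) ^ s * real q powr (-3/2 + \<epsilon>)"
proof (intro allI impI)
  fix \<epsilon> :: real assume \<epsilon>: "\<epsilon> > 0"
  obtain A B G D where A: "A \<subseteq> {..<s}" and B: "B \<subseteq> {..<s}" and AB: "A \<inter> B = {}" and cB: "card B = 5"
    and G: "\<forall>i\<in>A. \<forall>j\<in>B. 2 * M i j = of_int (G i j)" and D: "D \<noteq> (0::int)"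
    and P: "\<forall>d N. (\<forall>i\<in>A. N dvd (\<Sum>j\<in>B. G i j * d j)) \<longrightarrow> (\<forall>j\<in>B. N dvd D * d j)"
    using rank_off_data[OF int_off rk] by blast
  define nA where "nA = card A"
  define h where "h = real (nA + 5) / 2"
  have hpos: "h > 0" unfolding h_def by simp
  define \<delta> where "\<delta> = \<epsilon> / h"
  have \<delta>: "\<delta> > 0" unfolding \<delta>_def using \<epsilon> hpos by simp
  obtain c where c: "c > 0" "\<forall>n::nat. n > 0 \<longrightarrow> real (totient n) \<ge> c * real n powr (1 - \<delta>)"
    using totient_lower[OF \<delta>] by blast
  define C where "C = c powr (- h) * real_of_int \<bar>D\<bar> powr (5/2)"
  have fA: "finite A" and fB: "finite B" using A B finite_subset by auto
  have sA: "nA + 5 \<le> s"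
  proof -
    have "card (A \<union> B) = nA + 5" unfolding nA_def using AB fA fB cB by (simp add: card_Un_disjoint)
    moreover have "card (A \<union> B) \<le> card {..<s}" using A B by (intro card_mono) auto
    ultimately show ?thesis by simp
  qed
  show "\<exists>C. \<forall>W q :: nat. \<forall>b :: int. W > 0 \<longrightarrow> q > 0 \<longrightarrow> coprime b (int W) \<longrightarrow>
           norm (B_star s M W b q) \<le> C * real W ^ 5 / real (totient W) ^ s * real q powr (-3/2 + \<epsilon>)"
  proof (intro exI[of _ C] allI impI)
    fix W q :: nat and b :: int
    assume W: "W > 0" and q: "q > 0" and b: "coprime b (int W)"
    define \<xi> where "\<xi> = real (card (Xs q W b))"
    define \<kappa> where "\<kappa> = real (nat \<bar>D * int W\<bar> * W)"
    define Nb where "Nb = \<xi> ^ (s - nA - 5) * sqrt (\<xi> ^ nA * (real q ^ nA * (\<xi> ^ 5 * \<kappa> ^ 5)))"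
    define Aset where "Aset = {a. 1 \<le> a \<and> a \<le> int q \<and> coprime a (int q)}"
    have cardX: "\<xi> * real (totient W) = real (totient (q * W))"
      unfolding \<xi>_def using card_Xs[OF q W b] by (metis of_nat_mult)
    have phiW: "real (totient W) > 0" using W by simp
    have phiqW: "real (totient (q * W)) > 0" using W q by simp
    have "real (totient q) * real (totient W) \<le> real (totient (q * W))"
      using totient_mult_ge[of q W] by (metis of_nat_le_iff of_nat_mult)
    then have "real (totient q) * real (totient W) \<le> \<xi> * real (totient W)" using cardX by simp
    then have xi_ge: "\<xi> \<ge> real (totient q)" using phiW by (simp only: mult_le_cancel_right_pos)
    have "real (totient q) \<ge> c * real q powr (1 - \<delta>)" using c(2) q by blast
    then have xi_ge2: "\<xi> \<ge> c * real q powr (1 - \<delta>)" using xi_ge by linarith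
    have cq: "c * real q powr (1 - \<delta>) > 0" using c(1) q by simp
    have xipos: "\<xi> > 0" using xi_ge2 cq by linarith
    have kpos: "\<kappa> > 0" unfolding \<kappa>_def using D W by simp
    have kle: "\<kappa> \<le> real_of_int \<bar>D\<bar> * real W ^ 2"
      unfolding \<kappa>_def by (simp add: abs_mult power2_eq_square nat_mult_distrib)
    have Sa: "norm (S_star s M W b q a) \<le> Nb" if "a \<in> Aset" for a
    proof -
      have a: "coprime a (int q)" using that unfolding Aset_def by simp
      have "norm (S_star s M W b q a) \<le> real (card (Xs q W b)) ^ (s - card A - card B) *
        sqrt (real (card (Xs q W b)) ^ card A * (real q ^ card A * (real (card (Xs q W b)) ^ card B * real (nat \<bar>D * int W\<bar> * W) ^ card B)))"
        by (rule main_E[OF symm A B AB _ D _ q W a]) (use G P in auto)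
      then show ?thesis unfolding Nb_def \<xi>_def \<kappa>_def nA_def cB .
    qed
    have cardA: "card Aset \<le> q"
    proof -
      have "Aset \<subseteq> {1..int q}" unfolding Aset_def by auto
      then have "card Aset \<le> card {1..int q}" by (intro card_mono) auto
      then show ?thesis by simp
    qed
    have Nb0: "Nb \<ge> 0" unfolding Nb_def using xipos kpos by (intro mult_nonneg_nonneg real_sqrt_ge_zero) auto
    have "norm (\<Sum>a\<in>Aset. S_star s M W b q a) \<le> (\<Sum>a\<in>Aset. Nb)"
      by (rule order.trans[OF norm_sum sum_mono]) (rule Sa)
    also have "\<dots> = real (card Aset) * Nb" by simp
    also have "\<dots> \<le> real q * Nb" using cardA Nb0 by (intro mult_right_mono) auto
    finally have sumb: "norm (\<Sum>a\<in>Aset. S_star s M W b q a) \<le> real q * Nb" .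
    have Bs: "norm (B_star s M W b q) \<le> real q * Nb / real (totient (q * W)) ^ s"
    proof -
      have "B_star s M W b q = (\<Sum>a\<in>Aset. S_star s M W b q a) / of_nat (totient (q * W)) ^ s"
        unfolding B_star_def Aset_def ..
      then have "norm (B_star s M W b q) = norm (\<Sum>a\<in>Aset. S_star s M W b q a) / real (totient (q * W)) ^ s"
        by (simp add: norm_divide norm_power)
      then show ?thesis using sumb phiqW by (simp add: divide_right_mono)
    qed
    have pp: "(x ^ n) powr r = x powr (real n * r)" if "x > 0" for x :: real and n r
    proof -
      have "(x ^ n) powr r = (x powr real n) powr r" using that by (simp only: powr_realpow)
      also have "\<dots> = x powr (real n * r)" by (simp only: powr_powr)
      finally show ?thesis .
    qed
    have sq: "sqrt (\<xi> ^ nA * (real q ^ nA * (\<xi> ^ 5 * \<kappa> ^ 5))) = \<xi> powr h * real q powr (real nA / 2) * \<kappa> powr (5/2)"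
    proof -
      have "\<xi> ^ nA * (real q ^ nA * (\<xi> ^ 5 * \<kappa> ^ 5)) = \<xi> ^ (nA + 5) * real q ^ nA * \<kappa> ^ 5"
        by (simp add: power_add)
      then have "sqrt (\<xi> ^ nA * (real q ^ nA * (\<xi> ^ 5 * \<kappa> ^ 5))) = (\<xi> ^ (nA + 5) * real q ^ nA * \<kappa> ^ 5) powr (1/2)"
        using xipos kpos by (simp add: powr_half_sqrt)
      also have "\<dots> = (\<xi> ^ (nA + 5)) powr (1/2) * (real q ^ nA) powr (1/2) * (\<kappa> ^ 5) powr (1/2)"
        using xipos kpos q by (simp add: powr_mult)
      also have "\<dots> = \<xi> powr h * real q powr (real nA / 2) * \<kappa> powr (5/2)"
        using xipos kpos q unfolding h_def by (simp add: pp)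
      finally show ?thesis .
    qed
    have xs: "\<xi> ^ (s - nA - 5) * \<xi> powr h = \<xi> ^ s * \<xi> powr (- h)"
    proof -
      have "\<xi> ^ (s - nA - 5) * \<xi> powr h = \<xi> powr (real (s - nA - 5) + h)"
        using xipos by (simp add: powr_realpow[symmetric] powr_add)
      also have "real (s - nA - 5) + h = real s + (- h)" unfolding h_def using sA by (simp add: of_nat_diff field_simps)
      also have "\<xi> powr (real s + (- h)) = \<xi> powr (real s) * \<xi> powr (- h)"
        by (rule powr_add)
      also have "\<xi> powr (real s) = \<xi> ^ s" using xipos by (rule powr_realpow)
      finally show ?thesis .
    qed
    have NbE: "Nb = \<xi> ^ s * \<xi> powr (- h) * real q powr (real nA / 2) * \<kappa> powr (5/2)"
      unfolding Nb_def sq by (simp add: xs[symmetric] ac_simps)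
    have xs2: "\<xi> ^ s / real (totient (q * W)) ^ s = 1 / real (totient W) ^ s"
      using cardX[symmetric] phiW xipos by (simp add: power_mult_distrib)
    have b1: "\<xi> powr (- h) \<le> (c * real q powr (1 - \<delta>)) powr (- h)"
      using xi_ge2 cq hpos by (intro powr_mono2') auto
    have b1': "(c * real q powr (1 - \<delta>)) powr (- h) = c powr (- h) * real q powr (- h * (1 - \<delta>))"
      using c(1) q by (simp add: powr_mult powr_powr ac_simps)
    have b2: "\<kappa> powr (5/2) \<le> (real_of_int \<bar>D\<bar> * real W ^ 2) powr (5/2)"
      using kle kpos by (intro powr_mono2) auto
    have b2': "(real_of_int \<bar>D\<bar> * real W ^ 2) powr (5/2) = real_of_int \<bar>D\<bar> powr (5/2) * real W ^ 5"
    proof -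
      have Wp: "real W > 0" using W by simp
      have "(real_of_int \<bar>D\<bar> * real W ^ 2) powr (5/2) = real_of_int \<bar>D\<bar> powr (5/2) * (real W ^ 2) powr (5/2)"
        by (rule powr_mult)
      moreover have "(real W ^ 2) powr (5/2) = real W powr (real (2::nat) * (5/2))" by (rule pp[OF Wp])
      moreover have "real (2::nat) * (5/2) = real (5::nat)" by simp
      moreover have "real W powr (real (5::nat)) = real W ^ 5" by (rule powr_realpow[OF Wp])
      ultimately show ?thesis by simp
    qed
    have qexp: "real q * real q powr (real nA / 2) * real q powr (- h * (1 - \<delta>)) = real q powr (-3/2 + \<epsilon>)"
    proof -
      have qp: "real q > 0" using q by simp
      have "real q * real q powr (real nA / 2) * real q powr (- h * (1 - \<delta>)) = real q powr 1 * real q powr (real nA / 2) * real q powr (- h * (1 - \<delta>))"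
        using qp by simp
      also have "\<dots> = real q powr (1 + real nA / 2 + (- h * (1 - \<delta>)))"
        by (simp only: powr_add)
      finally have "real q * real q powr (real nA / 2) * real q powr (- h * (1 - \<delta>)) = real q powr (1 + real nA / 2 + (- h * (1 - \<delta>)))" .
      also have "1 + real nA / 2 + (- h * (1 - \<delta>)) = -3/2 + \<epsilon>"
        unfolding \<delta>_def h_def using hpos unfolding h_def by (simp add: field_simps)
      finally show ?thesis .
    qed
    have "real q * Nb / real (totient (q * W)) ^ s
        = (\<xi> ^ s / real (totient (q * W)) ^ s) * (real q * real q powr (real nA / 2) * \<xi> powr (- h) * \<kappa> powr (5/2))"
      unfolding NbE by (simp add: ac_simps)
    also have "\<dots> = (1 / real (totient W) ^ s) * (real q * real q powr (real nA / 2) * \<xi> powr (- h) * \<kappa> powr (5/2))"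
      unfolding xs2 ..
    also have "\<dots> \<le> (1 / real (totient W) ^ s) * (real q * real q powr (real nA / 2) * (c powr (- h) * real q powr (- h * (1 - \<delta>))) * (real_of_int \<bar>D\<bar> powr (5/2) * real W ^ 5))"
      using b1 b1' b2 b2' phiW by (intro mult_left_mono mult_mono) auto
    also have "\<dots> = C * real W ^ 5 / real (totient W) ^ s * (real q * real q powr (real nA / 2) * real q powr (- h * (1 - \<delta>)))"
      unfolding C_def by (simp add: field_simps)
    also have "\<dots> = C * real W ^ 5 / real (totient W) ^ s * real q powr (-3/2 + \<epsilon>)"
      unfolding qexp ..
    finally show "norm (B_star s M W b q) \<le> C * real W ^ 5 / real (totient W) ^ s * real q powr (-3/2 + \<epsilon>)"
      using Bs by linarith
  qed
qed

end
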